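(* Let $X$, $H$, $v=(r,H,s)$ (primitive), $Y$, $a,b,c,d$, $\widetilde H=H/d$ be as in the context, let $\gamma=\gamma(\widetilde H)$ in $N(X)$, and assume $\gcd(c,d\gamma)=1$. Then: (1) $N(X)=[\widetilde H,\ K(\widetilde H),\ \gamma\widetilde H^*+u^*(\widetilde H)]$, where $\widetilde H^*=\widetilde H/\widetilde H^2=d^2\widetilde H/(2abc^2)$, and $u^*(\widetilde H)+K(\widetilde H)$ has order $2abc^2/(d^2\gamma)$ in $K(\widetilde H)^*/K(\widetilde H)$. (2) Let $h\in N(Y)$ be the class of $(-a,0,b)$ mod $\mathbb Zv$. Then $h^2=2ab$, $h$ is divisible by $d$ in $N(Y)$, $\widetilde h=h/d$ is primitive in $N(Y)$, $\gamma(\widetilde h)=\gamma$ (computed in $N(Y)$), and $N(Y)=[\widetilde h,\ K(h),\ \gamma\widetilde h^*+u^*(\widetilde h)]$, where $K(h)=h^\perp\subset N(Y)$, $\widetilde h^*=d^2\widetilde h/(2ab)$, and $u^*(\widetilde h)+K(h)$ has order $2ab/(d^2\gamma)$ in $K(h)^*/K(h)$. (3) Under the map $K(\widetilde H)\to N(Y)$, $k\mapsto (0,k,0)\bmod\mathbb Zv$, $K(\widetilde H)$ is identified with a sublattice of $K(h)$ (so that $K(h)\otimes\mathbb Q=K(\widetilde H)\otimes\mathbb Q$), and $$K(h)=\Big[K(\widetilde H),\ \tfrac{2ab}{d^2\gamma}\,c\,u^*(\widetilde H)\Big],\qquad u^*(\widetilde h)+K(h)=m(a,b)\,c\,u^*(\widetilde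 H)+K(h),$$ where $m(a,b)$ is an integer with $m(a,b)\equiv-1\pmod{2a}$, $m(a,b)\equiv1\pmod{2b}$ (only its class mod $2ab/(d^2\gamma)$ matters).
   Context: $X$ is a smooth complex projective K3 surface with Picard lattice $N(X)\subset H^2(X,\mathbb Z)$. $H\in N(X)$ is a polarization with $H^2=2rs$, $r,s\in\mathbb N$; $d\in\mathbb N$ with $\widetilde H=H/d$ primitive. On $H^*(X,\mathbb Z)\cong\mathbb Z\oplus H^2(X,\mathbb Z)\oplus\mathbb Z$ use the Mukai pairing $((u_0,u_1,u_2),(v_0,v_1,v_2))=-(u_0v_2+u_2v_0)+u_1\cdot v_1$; $v=(r,H,s)$ is isotropic and primitive. $Y$ is the moduli space of $H$-semistable coherent sheaves with Mukai vector $v$ (minimal resolution if singular), a K3 surface; by Mukai, $H^2(Y,\mathbb Z)\cong v^\perp/\mathbb Zv$ as Hodge structures, and $N(Y)=v^\perp_{\mathbb Z\oplus N(X)\oplus\mathbb Z}/\mathbb Zv$. $c=\gcd(r,s)$, $a=r/c$, $b=s/c$. For an even lattice $S$ and primitive $P\in S$ with $P^2=2m\neq0$: $\gamma(P)>0$ with $P\cdot S=\gamma(P)\mathbb Z$; $K(P)=P^\perp\subset S$; $P^*=P/(2m)$; $u^*(P)\in K(P)^*$ is an element with $\gamma(P)P^*+u^*(P)\in S$ (canonical mod $K(P)$). $[x_1,\dots,x_k]$ denotes the subgroup generated by the listed elements/sublattices inside the ambient rational space. *)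

theory Defs
  imports "HOL-Analysis.Analysis" "HOL-Number_Theory.Cong"
begin

definition qspan :: "'a::real_vector set \<Rightarrow> 'a set" where
  "qspan A = {x. \<exists>F c. finite F \<and> F \<subseteq> A \<and> (\<forall>a. c a \<in> \<rat>) \<and> x = (\<Sum>a\<in>F. c a *\<^sub>R a)}"

definition zspan :: "'a::real_vector set \<Rightarrow> 'a set" where
  "zspan A = {x. \<exists>F (c::'a \<Rightarrow> int). finite F \<and> F \<subseteq> A \<and> x = (\<Sum>a\<in>F. of_int (c a) *\<^sub>R a)}"

definition lat_primitive :: "'a::real_vector set \<Rightarrow> 'a \<Rightarrow> bool" where
  "lat_primitive S P \<longleftrightarrow> P \<in> S \<and> (\<forall>n::nat. n > 1 \<longrightarrow> (1 / real n) *\<^sub>R P \<notin> S)"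

definition lat_gamma :: "('a \<Rightarrow> 'a \<Rightarrow> real) \<Rightarrow> 'a set \<Rightarrow> 'a \<Rightarrow> int" where
  "lat_gamma B S P = (THE g::int. g > 0 \<and> {B P x | x. x \<in> S} = {of_int (g * k) | k. True})"

definition orth :: "('a \<Rightarrow> 'a \<Rightarrow> real) \<Rightarrow> 'a set \<Rightarrow> 'a \<Rightarrow> 'a set" where
  "orth B S P = {x \<in> S. B P x = 0}"

definition pstar :: "('a::real_vector \<Rightarrow> 'a \<Rightarrow> real) \<Rightarrow> 'a \<Rightarrow> 'a" where
  "pstar B P = (1 / B P P) *\<^sub>R P"

definition dual :: "('a::real_vector \<Rightarrow> 'a \<Rightarrow> real) \<Rightarrow> 'a set \<Rightarrow> 'a set" where
  "dual B K = {y \<in> qspan K. \<forall>k\<in>K. B y k \<in> \<int>}"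

text \<open>The set of admissible choices of u^*(P) (canonical mod K(P))\<close>
definition ustar :: "('a::real_vector \<Rightarrow> 'a \<Rightarrow> real) \<Rightarrow> 'a set \<Rightarrow> 'a \<Rightarrow> 'a set" where
  "ustar B S P = {u \<in> dual B (orth B S P).
      of_int (lat_gamma B S P) *\<^sub>R pstar B P + u \<in> S}"

definition coset_order :: "'a::real_vector set \<Rightarrow> 'a \<Rightarrow> nat" where
  "coset_order K u = (LEAST n::nat. n > 0 \<and> real n *\<^sub>R u \<in> K)"

definition NXlat :: "(real^'n) set" where
  "NXlat = {x. \<forall>i. x $ i \<in> \<int>}"

definition bf :: "real^'n^'n \<Rightarrow> real^'n \<Rightarrow> real^'n \<Rightarrow> real" where
  "bf G x y = x \<bullet> (G *v y)"

definition mukai :: "real^'n^'n \<Rightarrow> real \<times> (real^'n) \<times> real \<Rightarrow> real \<times> (real^'n) \<times> real \<Rightarrow> real" where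
  "mukai G u w = - (fst u * snd (snd w) + snd (snd u) * fst w) + bf G (fst (snd u)) (fst (snd w))"

definition mukai_lat :: "(real \<times> (real^'n) \<times> real) set" where
  "mukai_lat = {w. fst w \<in> \<int> \<and> fst (snd w) \<in> NXlat \<and> snd (snd w) \<in> \<int>}"

text \<open>N(Y) = (v-perp in Z+N(X)+Z) / Zv, represented by its preimage saturated by the
  line R v (the radical of the Mukai form on v-perp).\<close>
definition NYlat :: "real^'n^'n \<Rightarrow> real \<times> (real^'n) \<times> real \<Rightarrow> (real \<times> (real^'n) \<times> real) set" where
  "NYlat G v = {w + t *\<^sub>R v | w t. w \<in> mukai_lat \<and> mukai G v w = 0}"

end

theory Submission
  imports Defs
begin


definition subgrp :: "'a::real_vector set \<Rightarrow> bool" where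
  "subgrp S \<longleftrightarrow> 0 \<in> S \<and> (\<forall>x\<in>S. \<forall>y\<in>S. x + y \<in> S) \<and> (\<forall>x\<in>S. -x \<in> S)"

lemma subgrp_0: "subgrp S \<Longrightarrow> 0 \<in> S" by (simp add: subgrp_def)
lemma subgrp_add: "subgrp S \<Longrightarrow> x \<in> S \<Longrightarrow> y \<in> S \<Longrightarrow> x + y \<in> S" by (simp add: subgrp_def)
lemma subgrp_neg: "subgrp S \<Longrightarrow> x \<in> S \<Longrightarrow> -x \<in> S" by (simp add: subgrp_def)
lemma subgrp_diff: "subgrp S \<Longrightarrow> x \<in> S \<Longrightarrow> y \<in> S \<Longrightarrow> x - y \<in> S"
  by (metis subgrp_add subgrp_neg diff_conv_add_uminus)

lemma subgrp_nat: "subgrp S \<Longrightarrow> x \<in> S \<Longrightarrow> of_nat n *\<^sub>R x \<in> S"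
proof (induction n)
  case 0 then show ?case by (simp add: subgrp_0)
next
  case (Suc n) then show ?case by (simp add: algebra_simps subgrp_add)
qed

lemma subgrp_int: assumes "subgrp S" "x \<in> S" shows "of_int k *\<^sub>R x \<in> S"
proof (cases "k \<ge> 0")
  case True
  then have "k = int (nat k)" by simp
  then have e: "of_int k *\<^sub>R x = of_nat (nat k) *\<^sub>R x" by (metis of_int_of_nat_eq)
  show ?thesis unfolding e by (rule subgrp_nat[OF assms])
next
  case False
  then have "k = - int (nat (-k))" by simp
  then have e: "of_int k *\<^sub>R x = - (of_nat (nat (-k)) *\<^sub>R x)"
    by (metis of_int_minus of_int_of_nat_eq scaleR_minus_left)
  show ?thesis unfolding e by (rule subgrp_neg[OF assms(1) subgrp_nat[OF assms]])
qed

lemma subgrp_sum: assumes "subgrp S" "finite F" "\<And>a. a \<in> F \<Longrightarrow> f a \<in> S" shows "sum f F \<in> S"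
  using assms(2,3)
proof (induction F rule: finite_induct)
  case empty then show ?case by (simp add: subgrp_0 assms(1))
next
  case (insert x F) then show ?case by (simp add: subgrp_add assms(1))
qed

lemma zspan_sub: assumes "subgrp S" "A \<subseteq> S" shows "zspan A \<subseteq> S"
proof
  fix x assume "x \<in> zspan A"
  then obtain F c where F: "finite F" "F \<subseteq> A" "x = (\<Sum>a\<in>F. of_int (c a) *\<^sub>R a)"
    unfolding zspan_def by blast
  show "x \<in> S" unfolding F(3)
    by (rule subgrp_sum[OF assms(1) F(1)]) (use F(2) assms in \<open>auto intro: subgrp_int\<close>)
qed

lemma zspan_base: "a \<in> A \<Longrightarrow> a \<in> zspan A"
  unfolding zspan_def
  by (rule CollectI, rule exI[of _ "{a}"], rule exI[of _ "\<lambda>_. 1"]) simp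

lemma sum_if_restrict: "finite F \<Longrightarrow> F1 \<subseteq> F \<Longrightarrow>
   (\<Sum>a\<in>F. (if a \<in> F1 then f a else 0)) = sum f F1"
  using sum.inter_restrict[of F f F1] by (simp add: Int_absorb1)

lemma zspan_intro: "finite F \<Longrightarrow> F \<subseteq> A \<Longrightarrow> x = (\<Sum>a\<in>F. of_int (c a) *\<^sub>R a) \<Longrightarrow> x \<in> zspan A"
  unfolding zspan_def by (rule CollectI, rule exI[of _ F], rule exI[of _ c]) simp

lemma qspan_intro: "finite F \<Longrightarrow> F \<subseteq> A \<Longrightarrow> (\<forall>a. c a \<in> \<rat>) \<Longrightarrow> x = (\<Sum>a\<in>F. c a *\<^sub>R a) \<Longrightarrow> x \<in> qspan A"
  unfolding qspan_def by (rule CollectI, rule exI[of _ F], rule exI[of _ c]) simp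

lemma zspan_subgrp: "subgrp (zspan A)"
proof -
  have z: "0 \<in> zspan A" unfolding zspan_def
    by (rule CollectI, rule exI[of _ "{}"]) simp
  have n: "-x \<in> zspan A" if "x \<in> zspan A" for x
  proof -
    from that obtain F c where F: "finite F" "F \<subseteq> A" "x = (\<Sum>a\<in>F. of_int (c a) *\<^sub>R a)"
      unfolding zspan_def by blast
    have "-x = (\<Sum>a\<in>F. of_int ((\<lambda>a. - c a) a) *\<^sub>R a)"
      unfolding F(3) by (simp add: sum_negf)
    then show ?thesis using F by (intro zspan_intro) 
  qed
  have p: "x + y \<in> zspan A" if "x \<in> zspan A" "y \<in> zspan A" for x y
  proof -
    from that(1) obtain F1 c1 where F1: "finite F1" "F1 \<subseteq> A" "x = (\<Sum>a\<in>F1. of_int (c1 a) *\<^sub>R a)"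
      unfolding zspan_def by blast
    from that(2) obtain F2 c2 where F2: "finite F2" "F2 \<subseteq> A" "y = (\<Sum>a\<in>F2. of_int (c2 a) *\<^sub>R a)"
      unfolding zspan_def by blast
    let ?c = "\<lambda>a. (if a \<in> F1 then c1 a else 0) + (if a \<in> F2 then c2 a else 0)"
    have "(\<Sum>a\<in>F1 \<union> F2. of_int (?c a) *\<^sub>R a)
       = (\<Sum>a\<in>F1 \<union> F2. (if a \<in> F1 then of_int (c1 a) *\<^sub>R a else 0))
       + (\<Sum>a\<in>F1 \<union> F2. (if a \<in> F2 then of_int (c2 a) *\<^sub>R a else 0))"
      unfolding sum.distrib[symmetric] by (rule sum.cong[OF refl]) (simp add: scaleR_add_left)
    also have "\<dots> = x + y" using F1 F2 by (simp add: sum_if_restrict)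
    finally have e: "x + y = (\<Sum>a\<in>F1 \<union> F2. of_int (?c a) *\<^sub>R a)" by simp
    have "finite (F1 \<union> F2)" "F1 \<union> F2 \<subseteq> A" using F1 F2 by auto
    then show ?thesis using e by (rule zspan_intro)
  qed
  show ?thesis unfolding subgrp_def using z n p by blast
qed

lemma zspan_add: "x \<in> zspan A \<Longrightarrow> y \<in> zspan A \<Longrightarrow> x + y \<in> zspan A"
  using zspan_subgrp subgrp_add by blast
lemma zspan_int: "x \<in> zspan A \<Longrightarrow> of_int k *\<^sub>R x \<in> zspan A"
  using zspan_subgrp subgrp_int by blast

lemma qspan_base: "a \<in> A \<Longrightarrow> a \<in> qspan A"
  unfolding qspan_def
  by (rule CollectI, rule exI[of _ "{a}"], rule exI[of _ "\<lambda>_. 1"]) simp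

lemma qspan_0: "0 \<in> qspan A"
  unfolding qspan_def by (rule CollectI, rule exI[of _ "{}"], rule exI[of _ "\<lambda>_. 1"]) simp

lemma qspan_scale: assumes "q \<in> \<rat>" "x \<in> qspan A" shows "q *\<^sub>R x \<in> qspan A"
proof -
  from assms(2) obtain F c where F: "finite F" "F \<subseteq> A" "\<forall>a. c a \<in> \<rat>" "x = (\<Sum>a\<in>F. c a *\<^sub>R a)"
    unfolding qspan_def by blast
  have "q *\<^sub>R x = (\<Sum>a\<in>F. (q * c a) *\<^sub>R a)" unfolding F(4) by (simp add: scaleR_sum_right)
  moreover have "\<forall>a. q * c a \<in> \<rat>" using F(3) assms(1) by simp
  ultimately show ?thesis using F by (intro qspan_intro)
qed

lemma qspan_add: assumes "x \<in> qspan A" "y \<in> qspan A" shows "x + y \<in> qspan A"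
proof -
  from assms(1) obtain F1 c1 where F1: "finite F1" "F1 \<subseteq> A" "\<forall>a. c1 a \<in> \<rat>" "x = (\<Sum>a\<in>F1. c1 a *\<^sub>R a)"
    unfolding qspan_def by blast
  from assms(2) obtain F2 c2 where F2: "finite F2" "F2 \<subseteq> A" "\<forall>a. c2 a \<in> \<rat>" "y = (\<Sum>a\<in>F2. c2 a *\<^sub>R a)"
    unfolding qspan_def by blast
  let ?c = "\<lambda>a. (if a \<in> F1 then c1 a else 0) + (if a \<in> F2 then c2 a else 0)"
  have "(\<Sum>a\<in>F1 \<union> F2. ?c a *\<^sub>R a)
     = (\<Sum>a\<in>F1 \<union> F2. (if a \<in> F1 then c1 a *\<^sub>R a else 0))
     + (\<Sum>a\<in>F1 \<union> F2. (if a \<in> F2 then c2 a *\<^sub>R a else 0))"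
    unfolding sum.distrib[symmetric] by (rule sum.cong[OF refl]) (simp add: scaleR_add_left)
  also have "\<dots> = x + y" using F1 F2 by (simp add: sum_if_restrict)
  finally have e: "x + y = (\<Sum>a\<in>F1 \<union> F2. ?c a *\<^sub>R a)" by simp
  have "?c a \<in> \<rat>" for a using F1(3) F2(3) by (cases "a \<in> F1"; cases "a \<in> F2") auto
  then have "\<forall>a. ?c a \<in> \<rat>" by blast
  moreover have "finite (F1 \<union> F2)" "F1 \<union> F2 \<subseteq> A" using F1 F2 by auto
  ultimately show ?thesis using e by (intro qspan_intro)
qed

lemma qspan_sub: assumes "0 \<in> C" "\<And>x y. x \<in> C \<Longrightarrow> y \<in> C \<Longrightarrow> x + y \<in> C"
  "\<And>q x. q \<in> \<rat> \<Longrightarrow> x \<in> C \<Longrightarrow> q *\<^sub>R x \<in> C" "A \<subseteq> C"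
  shows "qspan A \<subseteq> C"
proof
  fix x assume "x \<in> qspan A"
  then obtain F c where F: "finite F" "F \<subseteq> A" "\<forall>a. c a \<in> \<rat>" "x = (\<Sum>a\<in>F. c a *\<^sub>R a)"
    unfolding qspan_def by blast
  have "(\<Sum>a\<in>F. c a *\<^sub>R a) \<in> C" using F(1,2)
  proof (induction F rule: finite_induct)
    case empty then show ?case using assms(1) by simp
  next
    case (insert y F)
    have "c y *\<^sub>R y \<in> C" using insert.prems F(3) assms(3,4) by blast
    then show ?case using insert assms(2) by simp
  qed
  then show "x \<in> C" using F(4) by simp
qed

lemma qspan_mono: assumes "A \<subseteq> qspan B" shows "qspan A \<subseteq> qspan B"
proof (rule qspan_sub)
  show "0 \<in> qspan B" by (rule qspan_0)
  show "x + y \<in> qspan B" if "x \<in> qspan B" "y \<in> qspan B" for x y using that by (rule qspan_add)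
  show "q *\<^sub>R x \<in> qspan B" if "q \<in> \<rat>" "x \<in> qspan B" for q x using that by (rule qspan_scale)
qed (rule assms)

lemma zspan_qspan: "zspan A \<subseteq> qspan A"
proof
  fix x assume "x \<in> zspan A"
  then obtain F c where F: "finite F" "F \<subseteq> A" "x = (\<Sum>a\<in>F. of_int (c a) *\<^sub>R a)"
    unfolding zspan_def by blast
  then show "x \<in> qspan A" by (intro qspan_intro[of F A "\<lambda>a. of_int (c a)"]) auto
qed

lemma qspan_vanish:
  assumes "\<And>x y. f (x + y) = f x + f y" "\<And>c x. f (c *\<^sub>R x) = c * f x"
    "\<And>a. a \<in> A \<Longrightarrow> f a = 0" "x \<in> qspan A"
  shows "f x = (0::real)"
proof -
  have f0: "f 0 = 0" using assms(2)[of 0 0] by simp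
  have "qspan A \<subseteq> {x. f x = 0}"
  proof (rule qspan_sub)
    show "0 \<in> {x. f x = 0}" using f0 by simp
    show "x + y \<in> {x. f x = 0}" if "x \<in> {x. f x = 0}" "y \<in> {x. f x = 0}" for x y
      using that assms(1)[of x y] by simp
    show "q *\<^sub>R x \<in> {x. f x = 0}" if "x \<in> {x. f x = 0}" for q x
      using that assms(2)[of q x] by simp
    show "A \<subseteq> {x. f x = 0}" using assms(3) by blast
  qed
  then show ?thesis using assms(4) by blast
qed

lemma qspan_image:
  assumes "\<And>x y. f (x + y) = f x + f y" "\<And>c x. f (c *\<^sub>R x) = c *\<^sub>R f x" "x \<in> qspan A"
  shows "f x \<in> qspan (f ` A)"
proof -
  have f0: "f 0 = 0" using assms(2)[of 0 0] by simp
  have "qspan A \<subseteq> {x. f x \<in> qspan (f ` A)}"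
  proof (rule qspan_sub)
    show "0 \<in> {x. f x \<in> qspan (f ` A)}" using f0 qspan_0 by simp
    show "x + y \<in> {x. f x \<in> qspan (f ` A)}" if "x \<in> {x. f x \<in> qspan (f ` A)}" "y \<in> {x. f x \<in> qspan (f ` A)}" for x y
    proof -
      have "f x + f y \<in> qspan (f ` A)" using that qspan_add[of "f x" "f ` A" "f y"] by simp
      then show ?thesis by (simp only: mem_Collect_eq assms(1))
    qed
    show "q *\<^sub>R x \<in> {x. f x \<in> qspan (f ` A)}" if "q \<in> \<rat>" "x \<in> {x. f x \<in> qspan (f ` A)}" for q x
    proof -
      have "q *\<^sub>R f x \<in> qspan (f ` A)" using that qspan_scale[of q "f x" "f ` A"] by simp
      then show ?thesis by (simp only: mem_Collect_eq assms(2))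
    qed
    show "A \<subseteq> {x. f x \<in> qspan (f ` A)}"
    proof
      fix a assume "a \<in> A"
      then have "f a \<in> f ` A" by (rule imageI)
      then show "a \<in> {x. f x \<in> qspan (f ` A)}" using qspan_base by simp
    qed
  qed
  then show ?thesis using assms(3) by blast
qed




definition bilin :: "('a::real_vector \<Rightarrow> 'a \<Rightarrow> real) \<Rightarrow> bool" where
  "bilin B \<longleftrightarrow> (\<forall>x y z. B (x + y) z = B x z + B y z) \<and> (\<forall>c x y. B (c *\<^sub>R x) y = c * B x y)
     \<and> (\<forall>x y. B x y = B y x)"

lemma bilin_addL: "bilin B \<Longrightarrow> B (x + y) z = B x z + B y z" unfolding bilin_def by blast
lemma bilin_scaleL: "bilin B \<Longrightarrow> B (c *\<^sub>R x) y = c * B x y" unfolding bilin_def by blast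
lemma bilin_sym: "bilin B \<Longrightarrow> B x y = B y x" unfolding bilin_def by blast
lemma bilin_addR: "bilin B \<Longrightarrow> B z (x + y) = B z x + B z y"
  by (metis bilin_addL bilin_sym)
lemma bilin_scaleR: "bilin B \<Longrightarrow> B y (c *\<^sub>R x) = c * B y x"
  by (metis bilin_scaleL bilin_sym)
lemma bilin_negL: "bilin B \<Longrightarrow> B (- x) y = - B x y"
  using bilin_scaleL[of B "-1" x y] by simp
lemma bilin_negR: "bilin B \<Longrightarrow> B y (- x) = - B y x"
  using bilin_scaleR[of B y "-1" x] by simp
lemma bilin_diffL: "bilin B \<Longrightarrow> B (x - y) z = B x z - B y z"
  using bilin_addL[of B x "-y" z] bilin_negL[of B y z] by simp
lemma bilin_diffR: "bilin B \<Longrightarrow> B z (x - y) = B z x - B z y"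
  using bilin_addR[of B z x "-y"] bilin_negR[of B z y] by simp
lemma bilin_0L: "bilin B \<Longrightarrow> B 0 y = 0"
  using bilin_scaleL[of B 0 0 y] by simp
lemma bilin_0R: "bilin B \<Longrightarrow> B y 0 = 0"
  using bilin_scaleR[of B y 0 0] by simp

lemma lat_gamma_eq:
  assumes "g > 0" "{B P x | x. x \<in> S} = {of_int (g * k) | k. True}"
  shows "lat_gamma B S P = g"
  unfolding lat_gamma_def
proof (rule the_equality)
  show "g > 0 \<and> {B P x | x. x \<in> S} = {of_int (g * k) | k. True}" using assms by blast
  fix g' :: int assume h: "g' > 0 \<and> {B P x | x. x \<in> S} = {of_int (g' * k) | k. True}"
  then have e: "{of_int (g * k) | k. True} = ({of_int (g' * k) | k::int. True :: bool} :: real set)" using assms(2) by (simp only:)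
  have "(of_int (g * 1) :: real) \<in> {of_int (g' * k) | k. True}" using e by blast
  then obtain k where "(of_int (g * 1) :: real) = of_int (g' * k)" by blast
  then have k: "g = g' * k" by (simp only: of_int_eq_iff mult_1_right)
  have "(of_int (g' * 1) :: real) \<in> {of_int (g * k) | k. True}" using e by blast
  then obtain k' where "(of_int (g' * 1) :: real) = of_int (g * k')" by blast
  then have k': "g' = g * k'" by (simp only: of_int_eq_iff mult_1_right)
  have "g dvd g'" unfolding k' by simp
  moreover have "g' dvd g" unfolding k by simp
  ultimately show "g' = g" using h assms(1) zdvd_antisym_nonneg[of g' g] by simp
qed

lemma prim_rat:
  fixes P :: "'a::real_vector"
  assumes S: "subgrp S" and pr: "lat_primitive S P" and q: "q > 0"
    and mem: "(of_int p / of_int q) *\<^sub>R P \<in> S"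
  shows "q dvd p"
proof -
  define D where "D = gcd p q"
  have Dpos: "D > 0" using q by (simp add: D_def)
  obtain s t where st: "s * p + t * q = D" using bezout_int[of p q] D_def by blast
  have PS: "P \<in> S" using pr by (simp add: lat_primitive_def)
  have eq: "(of_int D / of_int q) *\<^sub>R P = of_int s *\<^sub>R ((of_int p / of_int q) *\<^sub>R P) + of_int t *\<^sub>R P"
  proof -
    have "(of_int D / of_int q :: real) = of_int s * (of_int p / of_int q) + of_int t"
      using q st[symmetric] by (simp add: field_simps)
    then show ?thesis by (simp add: scaleR_add_left)
  qed
  have DS: "(of_int D / of_int q) *\<^sub>R P \<in> S"
    unfolding eq by (intro subgrp_add[OF S] subgrp_int[OF S] mem PS)
  have "D dvd q" by (simp add: D_def)
  then obtain m where m: "q = D * m" by blast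
  have mpos: "m > 0" using m q Dpos by (simp add: zero_less_mult_iff)
  have "(of_int D / of_int q :: real) = 1 / real (nat m)"
    using m Dpos mpos by simp
  then have "(1 / real (nat m)) *\<^sub>R P \<in> S" using DS by simp
  moreover have "nat m > 1 \<Longrightarrow> (1 / real (nat m)) *\<^sub>R P \<notin> S" using pr unfolding lat_primitive_def by blast
  ultimately have "\<not> nat m > 1" by blast
  then have "m = 1" using mpos by simp
  then have "q = gcd p q" using m by (simp add: D_def)
  then show ?thesis by (metis gcd_dvd1)
qed

locale latt =
  fixes B :: "'a::real_vector \<Rightarrow> 'a \<Rightarrow> real" and S :: "'a set" and P :: 'a and g N0 :: int
  assumes bil: "bilin B" and S: "subgrp S" and integ: "\<And>x y. x \<in> S \<Longrightarrow> y \<in> S \<Longrightarrow> B x y \<in> \<int>"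
    and prim: "lat_primitive S P" and gpos: "g > 0"
    and gam: "{B P x | x. x \<in> S} = {of_int (g * k) | k. True}"
    and N0pos: "N0 > 0" and PP: "B P P = of_int (g * N0)"
begin

lemma PS: "P \<in> S" using prim by (simp add: lat_primitive_def)

lemma gamma: "lat_gamma B S P = g" by (rule lat_gamma_eq) (rule gpos, rule gam)

lemma gam_val: "x \<in> S \<Longrightarrow> \<exists>k. B P x = of_int (g * k)"
  using gam by blast

lemma gam_ex: "\<exists>x\<in>S. B P x = of_int g"
proof -
  have "(of_int (g * 1) :: real) \<in> {B P x | x. x \<in> S}" unfolding gam by blast
  then show ?thesis by auto
qed

abbreviation "K \<equiv> orth B S P"
abbreviation "Ps \<equiv> pstar B P"

lemma PPne: "B P P \<noteq> 0" using PP gpos N0pos by simp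

lemma P_Ps: "B P Ps = 1"
  unfolding pstar_def using bilin_scaleR[OF bil] PPne by simp

lemma K_subgrp: "subgrp K"
  unfolding subgrp_def orth_def
  using S bilin_0R[OF bil] bilin_addR[OF bil] bilin_negR[OF bil]
  by (auto intro: subgrp_0 subgrp_add subgrp_neg)

lemma qK_perp: "u \<in> qspan K \<Longrightarrow> B P u = 0"
  by (rule qspan_vanish[where f="B P" and A=K])
     (auto simp: bilin_addR[OF bil] bilin_scaleR[OF bil] orth_def)

lemma ustar_props:
  assumes "u \<in> ustar B S P"
  shows "B P u = 0" "of_int g *\<^sub>R Ps + u \<in> S" "u \<in> qspan K"
  using assms qK_perp unfolding ustar_def dual_def gamma by auto

lemma ustar_ne: "ustar B S P \<noteq> {}"
proof -
  obtain x1 where x1: "x1 \<in> S" "B P x1 = of_int g" using gam_ex by blast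
  define u0 where "u0 = x1 - of_int g *\<^sub>R Ps"
  have perp: "B P u0 = 0"
    unfolding u0_def by (simp add: bilin_diffR[OF bil] bilin_scaleR[OF bil] P_Ps x1)
  have "of_int N0 *\<^sub>R u0 = of_int N0 *\<^sub>R x1 - P"
    unfolding u0_def pstar_def PP using gpos N0pos by (simp add: algebra_simps)
  then have "of_int N0 *\<^sub>R u0 \<in> S" using subgrp_diff[OF S subgrp_int[OF S x1(1)] PS] by simp
  moreover have "B P (of_int N0 *\<^sub>R u0) = 0" by (simp add: bilin_scaleR[OF bil] perp)
  ultimately have NK: "of_int N0 *\<^sub>R u0 \<in> K" by (simp add: orth_def)
  have "u0 = (1 / of_int N0) *\<^sub>R (of_int N0 *\<^sub>R u0)" using N0pos by simp
  then have uq: "u0 \<in> qspan K" using qspan_scale[OF _ qspan_base[OF NK], of "1 / of_int N0"] by simp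
  have "B u0 k \<in> \<int>" if "k \<in> K" for k
  proof -
    have "B u0 k = B x1 k - of_int g * B Ps k"
      unfolding u0_def by (simp add: bilin_diffL[OF bil] bilin_scaleL[OF bil])
    moreover have "B Ps k = 0" using that unfolding pstar_def orth_def
      by (simp add: bilin_scaleL[OF bil])
    moreover have "B x1 k \<in> \<int>" using that x1 integ by (simp add: orth_def)
    ultimately show ?thesis by simp
  qed
  moreover have "of_int g *\<^sub>R Ps + u0 \<in> S" using x1 by (simp add: u0_def)
  ultimately have "u0 \<in> ustar B S P" using uq unfolding ustar_def dual_def gamma by blast
  then show ?thesis by blast
qed

lemma span_eq:
  assumes u: "u \<in> ustar B S P"
  shows "S = zspan ({P} \<union> K \<union> {of_int g *\<^sub>R Ps + u})"
proof
  note up = ustar_props[OF u]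
  let ?x = "of_int g *\<^sub>R Ps + u"
  show "zspan ({P} \<union> K \<union> {?x}) \<subseteq> S"
    by (rule zspan_sub[OF S]) (use PS up in \<open>auto simp: orth_def\<close>)
  show "S \<subseteq> zspan ({P} \<union> K \<union> {?x})"
  proof
    fix y assume y: "y \<in> S"
    obtain k where k: "B P y = of_int (g * k)" using gam_val[OF y] by blast
    have Bx: "B P ?x = of_int g"
      by (simp add: bilin_addR[OF bil] bilin_scaleR[OF bil] P_Ps up(1))
    have "y - of_int k *\<^sub>R ?x \<in> S" by (rule subgrp_diff[OF S y subgrp_int[OF S up(2)]])
    moreover have "B P (y - of_int k *\<^sub>R ?x) = 0"
      by (simp add: bilin_diffR[OF bil] bilin_scaleR[OF bil] Bx k)
    ultimately have yK: "y - of_int k *\<^sub>R ?x \<in> K" by (simp add: orth_def)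
    have "y = of_int k *\<^sub>R ?x + (y - of_int k *\<^sub>R ?x)" by simp
    also have "\<dots> \<in> zspan ({P} \<union> K \<union> {?x})"
      by (intro zspan_add zspan_int zspan_base) (use yK in auto)
    finally show "y \<in> zspan ({P} \<union> K \<union> {?x})" .
  qed
qed

lemma order_eq:
  assumes u: "u \<in> ustar B S P"
  shows "coset_order K u = nat N0"
  unfolding coset_order_def
proof (rule Least_equality)
  note up = ustar_props[OF u]
  let ?x = "of_int g *\<^sub>R Ps + u"
  have Nu: "real (nat N0) *\<^sub>R u = of_int N0 *\<^sub>R ?x - P"
    unfolding pstar_def PP using gpos N0pos by (simp add: algebra_simps)
  have "real (nat N0) *\<^sub>R u \<in> S" unfolding Nu by (rule subgrp_diff[OF S subgrp_int[OF S up(2)] PS])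
  moreover have "B P (real (nat N0) *\<^sub>R u) = 0" by (simp add: bilin_scaleR[OF bil] up(1))
  ultimately show "nat N0 > 0 \<and> real (nat N0) *\<^sub>R u \<in> K" using N0pos by (simp add: orth_def)
  fix n assume n: "n > 0 \<and> real n *\<^sub>R u \<in> K"
  show "nat N0 \<le> n"
  proof (rule ccontr)
    assume "\<not> nat N0 \<le> n"
    then have lt: "int n < N0" by simp
    have "real n *\<^sub>R u \<in> S" using n by (simp add: orth_def)
    then have "of_int (int n) *\<^sub>R ?x - real n *\<^sub>R u \<in> S"
      using subgrp_diff[OF S subgrp_int[OF S up(2)]] by blast
    moreover have "of_int (int n) *\<^sub>R ?x - real n *\<^sub>R u = (of_int (int n) / of_int N0) *\<^sub>R P"
      unfolding pstar_def PP using gpos N0pos by (simp add: algebra_simps)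
    ultimately have "(of_int (int n) / of_int N0) *\<^sub>R P \<in> S" by simp
    then have "N0 dvd int n" by (rule prim_rat[OF S prim N0pos])
    then show False using lt n zdvd_imp_le[of N0 "int n"] by simp
  qed
qed

end




lemma bf_expand: "bf G x y = (\<Sum>i\<in>UNIV. \<Sum>j\<in>UNIV. x $ i * G $ i $ j * y $ j)"
  unfolding bf_def inner_vec_def matrix_vector_mult_def
  by (simp add: sum_distrib_left mult.assoc)

lemma bf_bilin: assumes "\<forall>i j. G $ i $ j = G $ j $ i" shows "bilin (bf G)"
proof -
  have add: "bf G (x + y) z = bf G x z + bf G y z" for x y z
    unfolding bf_def by (simp add: inner_add_left)
  have sc: "bf G (c *\<^sub>R x) y = c * bf G x y" for c x y
    unfolding bf_def by simp
  have sy: "bf G x y = bf G y x" for x y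
  proof -
    have "bf G x y = (\<Sum>i\<in>UNIV. \<Sum>j\<in>UNIV. x $ i * G $ i $ j * y $ j)" by (rule bf_expand)
    also have "\<dots> = (\<Sum>j\<in>UNIV. \<Sum>i\<in>UNIV. x $ i * G $ i $ j * y $ j)" by (rule sum.swap)
    also have "\<dots> = (\<Sum>j\<in>UNIV. \<Sum>i\<in>UNIV. y $ j * G $ j $ i * x $ i)"
      using assms by (intro sum.cong refl) (simp add: mult.commute mult.left_commute)
    also have "\<dots> = bf G y x" by (rule bf_expand[symmetric])
    finally show ?thesis .
  qed
  show ?thesis unfolding bilin_def using add sc sy by blast
qed

lemma bf_int: assumes "\<forall>i j. G $ i $ j \<in> \<int>" "x \<in> NXlat" "y \<in> NXlat" shows "bf G x y \<in> \<int>"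
  unfolding bf_expand using assms unfolding NXlat_def
  by (intro Ints_sum Ints_mult) auto

lemma NX_subgrp: "subgrp NXlat"
  unfolding subgrp_def NXlat_def by (auto intro: Ints_add Ints_minus)

lemma mukai_bilin: assumes "bilin (bf G)" shows "bilin (mukai G)"
proof -
  have add: "mukai G (x + y) z = mukai G x z + mukai G y z" for x y z
    unfolding mukai_def using bilin_addL[OF assms] by (simp add: algebra_simps)
  have sc: "mukai G (c *\<^sub>R x) y = c * mukai G x y" for c x y
    unfolding mukai_def using bilin_scaleL[OF assms] by (simp add: algebra_simps)
  have sy: "mukai G x y = mukai G y x" for x y
    unfolding mukai_def using bilin_sym[OF assms] by (simp add: algebra_simps)
  show ?thesis unfolding bilin_def using add sc sy by blast
qed

lemma mukai_lat_subgrp: "subgrp mukai_lat"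
  unfolding subgrp_def mukai_lat_def using NX_subgrp
  by (auto intro: Ints_add Ints_minus subgrp_add subgrp_neg subgrp_0)

lemma mukai_int: assumes "\<forall>i j. G $ i $ j \<in> \<int>" "x \<in> mukai_lat" "y \<in> mukai_lat"
  shows "mukai G x y \<in> \<int>"
  using assms bf_int[OF assms(1)] unfolding mukai_def mukai_lat_def
  by (intro Ints_add Ints_minus Ints_mult) auto

lemma NY_mem: "w \<in> mukai_lat \<Longrightarrow> mukai G v w = 0 \<Longrightarrow> w + t *\<^sub>R v \<in> NYlat G v"
  unfolding NYlat_def by blast

lemma NY_subgrp: assumes "bilin (mukai G)" shows "subgrp (NYlat G v)"
proof -
  note B = assms
  have z: "0 \<in> NYlat G v" using NY_mem[of 0 G v 0] subgrp_0[OF mukai_lat_subgrp] bilin_0R[OF B] by simp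
  have p: "x + y \<in> NYlat G v" if hx: "x \<in> NYlat G v" and hy: "y \<in> NYlat G v" for x y
  proof -
    obtain w t where w: "x = w + t *\<^sub>R v" "w \<in> mukai_lat" "mukai G v w = 0" using hx unfolding NYlat_def by blast
    obtain w' t' where w': "y = w' + t' *\<^sub>R v" "w' \<in> mukai_lat" "mukai G v w' = 0" using hy unfolding NYlat_def by blast
    have "x + y = (w + w') + (t + t') *\<^sub>R v" using w w' by (simp add: algebra_simps)
    moreover have "w + w' \<in> mukai_lat" using subgrp_add[OF mukai_lat_subgrp w(2) w'(2)] .
    moreover have "mukai G v (w + w') = 0" using w w' bilin_addR[OF B] by simp
    ultimately show ?thesis using NY_mem by metis
  qed
  have n: "- x \<in> NYlat G v" if hx: "x \<in> NYlat G v" for x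
  proof -
    obtain w t where w: "x = w + t *\<^sub>R v" "w \<in> mukai_lat" "mukai G v w = 0" using hx unfolding NYlat_def by blast
    have "- x = (- w) + (- t) *\<^sub>R v" using w by simp
    moreover have "- w \<in> mukai_lat" using subgrp_neg[OF mukai_lat_subgrp w(2)] .
    moreover have "mukai G v (- w) = 0" using w bilin_negR[OF B] by simp
    ultimately show ?thesis using NY_mem by metis
  qed
  show ?thesis unfolding subgrp_def using z p n by blast
qed

lemma NY_int: assumes "bilin (mukai G)" "\<forall>i j. G $ i $ j \<in> \<int>" "mukai G v v = 0"
  "x \<in> NYlat G v" "y \<in> NYlat G v" shows "mukai G x y \<in> \<int>"
proof -
  note B = assms(1)
  obtain w t where w: "x = w + t *\<^sub>R v" "w \<in> mukai_lat" "mukai G v w = 0" using assms(4) unfolding NYlat_def by blast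
  obtain w' t' where w': "y = w' + t' *\<^sub>R v" "w' \<in> mukai_lat" "mukai G v w' = 0" using assms(5) unfolding NYlat_def by blast
  have "mukai G x y = mukai G w w'"
    unfolding w(1) w'(1)
    using w(3) w'(3) assms(3) bilin_sym[OF B, of w v] bilin_sym[OF B, of w' v]
    by (simp add: bilin_addL[OF B] bilin_addR[OF B] bilin_scaleL[OF B] bilin_scaleR[OF B])
  then show ?thesis using mukai_int[OF assms(2) w(2) w'(2)] by simp
qed

lemma int_subgroup_gen:
  assumes B: "bilin B" and S: "subgrp S" and I: "\<And>x. x \<in> S \<Longrightarrow> B P x \<in> \<int>"
    and x0: "x0 \<in> S" "B P x0 \<noteq> 0"
  shows "\<exists>g>0. {B P x | x. x \<in> S} = {of_int (g * k) | k. True}"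
proof -
  obtain z where z: "B P x0 = of_int z" using I[OF x0(1)] by (auto elim: Ints_cases)
  have "\<exists>n::nat. n > 0 \<and> (\<exists>x\<in>S. B P x = real n)"
  proof (cases "z > 0")
    case True then show ?thesis using z x0 by (intro exI[of _ "nat z"]) auto
  next
    case False
    then have "z < 0" using z x0 by auto
    moreover have "B P (- x0) = of_int (- z)" using z bilin_negR[OF B] by simp
    ultimately show ?thesis using subgrp_neg[OF S x0(1)] by (intro exI[of _ "nat (-z)"]) auto
  qed
  then obtain n0 where n0: "n0 > 0 \<and> (\<exists>x\<in>S. B P x = real n0)" by blast
  define g where "g = (LEAST n::nat. n > 0 \<and> (\<exists>x\<in>S. B P x = real n))"
  have gP: "g > 0 \<and> (\<exists>x\<in>S. B P x = real g)" unfolding g_def by (rule LeastI[of _ n0]) (rule n0)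
  then obtain xg where xg: "xg \<in> S" "B P xg = real g" by blast
  have gmin: "g \<le> m" if "m > 0" "x \<in> S" "B P x = real m" for m x
    unfolding g_def by (rule Least_le) (use that in blast)
  have "{B P x | x. x \<in> S} = {of_int (int g * k) | k. True}"
  proof (intro set_eqI iffI)
    fix y :: real assume "y \<in> {B P x | x. x \<in> S}"
    then obtain x where x: "x \<in> S" "y = B P x" by blast
    obtain w where w: "B P x = of_int w" using I[OF x(1)] by (auto elim: Ints_cases)
    define q where "q = w div int g"
    define rm where "rm = w mod int g"
    have wq: "w = int g * q + rm" unfolding q_def rm_def by simp
    have rm: "0 \<le> rm" "rm < int g" unfolding rm_def using gP by auto
    have xs: "x - of_int q *\<^sub>R xg \<in> S" by (rule subgrp_diff[OF S x(1) subgrp_int[OF S xg(1)]])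
    have "B P (x - of_int q *\<^sub>R xg) = of_int rm"
      using w xg wq by (simp add: bilin_diffR[OF B] bilin_scaleR[OF B] algebra_simps)
    then have "B P (x - of_int q *\<^sub>R xg) = real (nat rm)" using rm by simp
    then have "rm = 0"
      using gmin[of "nat rm", OF _ xs] rm by (cases "rm = 0") auto
    then show "y \<in> {of_int (int g * k) | k. True}" using x w wq by auto
  next
    fix y :: real assume "y \<in> {of_int (int g * k) | k. True}"
    then obtain k where k: "y = of_int (int g * k)" by blast
    have "B P (of_int k *\<^sub>R xg) = y" using k xg by (simp add: bilin_scaleR[OF B])
    then show "y \<in> {B P x | x. x \<in> S}" using subgrp_int[OF S xg(1)] by blast
  qed
  then show ?thesis using gP by (intro exI[of _ "int g"]) auto
qed




lemma NT_ht:
  fixes a b c d :: int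
  assumes "coprime a b" "coprime c d" "d dvd a * b"
  shows "\<exists>j. d dvd a * (j * c - 1) \<and> d dvd b * (j * c + 1)"
proof -
  obtain p q where pq: "d = p * q" "p dvd a" "q dvd b" using division_decomp[OF assms(3)] by blast
  have cpq: "coprime p q" using assms(1) pq(2,3) coprime_divisors by blast
  obtain s t where st: "s * p + t * q = 1" using bezout_int[of p q] cpq by auto
  obtain al be where ab: "al * c + be * d = 1" using bezout_int[of c d] assms(2) by auto
  define y where "y = 2 * s * p - 1"
  have y1: "q dvd y - 1"
  proof -
    have "y - 1 = q * (- 2 * t)" using st unfolding y_def by (simp add: algebra_simps)
    then show ?thesis by simp
  qed
  have y2: "p dvd y + 1" unfolding y_def by simp
  define j where "j = al * y"
  have jc: "j * c = y - y * be * d" unfolding j_def using ab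
    by (metis (no_types, lifting) mult.assoc mult.commute mult.right_neutral right_diff_distrib' eq_diff_eq)
  have "a * (j * c - 1) = a * (y - 1) - a * y * be * d" unfolding jc by (simp add: algebra_simps)
  moreover have "d dvd a * (y - 1)" unfolding pq(1) using pq(2) y1 by (rule mult_dvd_mono)
  ultimately have 1: "d dvd a * (j * c - 1)" by simp
  have "b * (j * c + 1) = (y + 1) * b - b * y * be * d" unfolding jc by (simp add: algebra_simps)
  moreover have "d dvd (y + 1) * b" unfolding pq(1) using y2 pq(3) by (rule mult_dvd_mono)
  ultimately have 2: "d dvd b * (j * c + 1)" by simp
  show ?thesis using 1 2 by blast
qed

lemma NT_gam_aux:
  fixes a b D w0 w2 :: int
  assumes "coprime (2 * a) b" "D dvd (2 * a) * b" "D dvd a * w2 + b * w0"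
  shows "D dvd a * w2 - b * w0"
proof -
  obtain p q where pq: "D = p * q" "p dvd 2 * a" "q dvd b" using division_decomp[OF assms(2)] by blast
  have cpq: "coprime p q" using assms(1) pq(2,3) coprime_divisors by blast
  have q1: "q dvd b * w0" using pq(3) by simp
  have q2: "q dvd a * w2 + b * w0" using assms(3) pq(1) by (metis dvd_mult_right)
  have "q dvd (a * w2 + b * w0) - 2 * (b * w0)" using dvd_diff[OF q2 dvd_mult[OF q1, of 2]] .
  moreover have "(a * w2 + b * w0) - 2 * (b * w0) = a * w2 - b * w0" by simp
  ultimately have qd: "q dvd a * w2 - b * w0" by simp
  have p1: "p dvd 2 * (a * w2)" using pq(2) by (metis dvd_mult2 mult.assoc)
  have p2: "p dvd a * w2 + b * w0" using assms(3) pq(1) by (metis dvd_mult_left)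
  have "p dvd 2 * (a * w2) - (a * w2 + b * w0)" using dvd_diff[OF p1 p2] .
  moreover have "2 * (a * w2) - (a * w2 + b * w0) = a * w2 - b * w0" by simp
  ultimately have pd: "p dvd a * w2 - b * w0" by simp
  show ?thesis unfolding pq(1) using pd qd cpq by (rule divides_mult)
qed

lemma NT_gam:
  fixes a b D w0 w2 :: int
  assumes "coprime a b" "D dvd 2 * a * b" "D dvd a * w2 + b * w0"
  shows "D dvd a * w2 - b * w0"
proof (cases "odd b")
  case True
  then have "coprime (2 * a) b" using assms(1) by simp
  then show ?thesis using NT_gam_aux[of a b D w2 w0] assms by (simp add: mult.assoc)
next
  case False
  then have "odd a" using assms(1) by auto
  then have "coprime (2 * b) a" using assms(1) by (simp add: coprime_commute)
  moreover have "D dvd (2 * b) * a" using assms(2) by (simp add: algebra_simps)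
  moreover have "D dvd b * w0 + a * w2" using assms(3) by (simp add: algebra_simps)
  ultimately have "D dvd b * w0 - a * w2" by (rule NT_gam_aux)
  moreover have "b * w0 - a * w2 = - (a * w2 - b * w0)" by simp
  ultimately show ?thesis by (metis dvd_minus_iff)
qed




theorem proposition2p3p1:
  fixes G :: "real^'n^'n" and H :: "real^'n" and r s d :: nat
    and c a b :: nat and g :: int and Ht :: "real^'n"
    and v h ht :: "real \<times> (real^'n) \<times> real"
    and NY KH Kh :: "(real \<times> (real^'n) \<times> real) set" and KHt :: "(real^'n) set"
    and \<iota> :: "real^'n \<Rightarrow> real \<times> (real^'n) \<times> real"
  assumes G_int: "\<forall>i j. G $ i $ j \<in> \<int>"
    and G_sym: "\<forall>i j. G $ i $ j = G $ j $ i"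
    and G_even: "\<forall>x\<in>NXlat. bf G x x \<in> {2 * of_int k | k. True}"
    and G_nondeg: "det G \<noteq> 0"
    and rank_le: "CARD('n) \<le> 20"
    and r_pos: "r > 0" and s_pos: "s > 0" and d_pos: "d > 0"
    and H_in: "H \<in> NXlat"
    and H_sq: "bf G H H = 2 * real r * real s"
    and hodge_index: "\<forall>x\<in>NXlat. x \<noteq> 0 \<and> bf G H x = 0 \<longrightarrow> bf G x x < 0"
  defines "Ht \<equiv> (1 / real d) *\<^sub>R H"
  assumes Ht_prim: "lat_primitive NXlat Ht"
  defines "v \<equiv> (real r, H, real s)"
  assumes v_prim: "lat_primitive mukai_lat v"
  defines "c \<equiv> gcd r s" and "a \<equiv> r div gcd r s" and "b \<equiv> s div gcd r s"
    and "g \<equiv> lat_gamma (bf G) NXlat Ht"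
  assumes coprime: "coprime (int c) (int d * g)"
  defines "KHt \<equiv> orth (bf G) NXlat Ht"
    and "NY \<equiv> NYlat G v"
    and "h \<equiv> (- real a, 0, real b)"
    and "ht \<equiv> (1 / real d) *\<^sub>R h"
    and "Kh \<equiv> orth (mukai G) NY h"
    and "\<iota> \<equiv> (\<lambda>k. (0, k, 0))"
  shows
    "\<comment> \<open>(1)\<close>
     (pstar (bf G) Ht = (real d ^ 2 / (2 * real a * real b * real c ^ 2)) *\<^sub>R Ht
     \<and> ustar (bf G) NXlat Ht \<noteq> {}
     \<and> (\<forall>u \<in> ustar (bf G) NXlat Ht.
          NXlat = zspan ({Ht} \<union> KHt \<union> {of_int g *\<^sub>R pstar (bf G) Ht + u})
        \<and> real (coset_order KHt u) = 2 * real a * real b * real c ^ 2 / (real d ^ 2 * of_int g)))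
     \<and>
     \<comment> \<open>(2)\<close>
     (h \<in> NY \<and> mukai G h h = 2 * real a * real b
     \<and> ht \<in> NY \<and> lat_primitive NY ht
     \<and> lat_gamma (mukai G) NY ht = g
     \<and> pstar (mukai G) ht = (real d ^ 2 / (2 * real a * real b)) *\<^sub>R ht
     \<and> ustar (mukai G) NY ht \<noteq> {}
     \<and> (\<forall>u \<in> ustar (mukai G) NY ht.
          NY = zspan ({ht} \<union> Kh \<union> {of_int g *\<^sub>R pstar (mukai G) ht + u})
        \<and> real (coset_order Kh u) = 2 * real a * real b / (real d ^ 2 * of_int g)))
     \<and>
     \<comment> \<open>(3)\<close>
     (\<iota> ` KHt \<subseteq> Kh
     \<and> (\<forall>k\<in>KHt. \<forall>k'\<in>KHt. mukai G (\<iota> k) (\<iota> k') = bf G k k')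
     \<and> (\<forall>k\<in>KHt. \<forall>t::real. \<iota> k = t *\<^sub>R v \<longrightarrow> k = 0)
     \<and> qspan Kh = qspan (\<iota> ` KHt \<union> range (\<lambda>t::real. t *\<^sub>R v))
     \<and> (\<forall>u \<in> ustar (bf G) NXlat Ht.
          Kh = zspan (\<iota> ` KHt \<union> range (\<lambda>t::real. t *\<^sub>R v)
                 \<union> {(2 * real a * real b / (real d ^ 2 * of_int g) * real c) *\<^sub>R \<iota> u}))
     \<and> (\<forall>u \<in> ustar (bf G) NXlat Ht. \<forall>w \<in> ustar (mukai G) NY ht. \<forall>m::int.
          [m = -1] (mod 2 * int a) \<and> [m = 1] (mod 2 * int b)
          \<longrightarrow> w - (of_int m * real c) *\<^sub>R \<iota> u \<in> Kh))"
proof -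
  have cpos: "c > 0" using r_pos by (simp add: c_def)
  have r_eq: "r = c * a" unfolding a_def c_def by simp
  have s_eq: "s = c * b" unfolding b_def c_def by simp
  have apos: "a > 0" using r_pos r_eq by (cases "a = 0") auto
  have bpos: "b > 0" using s_pos s_eq by (cases "b = 0") auto
  have cop_ab: "coprime a b" unfolding a_def b_def using div_gcd_coprime r_pos by blast
  have cop_ab_i: "coprime (int a) (int b)" using cop_ab by simp
  have cop_cd: "coprime (int c) (int d)" using coprime by simp
  have cop_cg: "coprime (int c) g" using coprime by simp
  have rr: "real r = real c * real a" using r_eq by simp
  have sr: "real s = real c * real b" using s_eq by simp
  have Bb: "bilin (bf G)" by (rule bf_bilin[OF G_sym])
  have Bm: "bilin (mukai G)" by (rule mukai_bilin[OF Bb])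
  have HtX: "Ht \<in> NXlat" using Ht_prim by (simp add: lat_primitive_def)
  have H_eq: "H = real d *\<^sub>R Ht" unfolding Ht_def using d_pos by simp
  have bfHH: "bf G H H = real d ^ 2 * bf G Ht Ht"
    unfolding H_eq by (simp add: bilin_scaleL[OF Bb] bilin_scaleR[OF Bb] power2_eq_square)
  have q_eq: "bf G Ht Ht = 2 * real c ^ 2 * real a * real b / real d ^ 2"
    using H_sq bfHH rr sr d_pos by (simp add: field_simps power2_eq_square)
  obtain e where e: "bf G Ht Ht = 2 * of_int e" using G_even HtX by blast
  have "real d ^ 2 * (2 * of_int e) = 2 * real c ^ 2 * real a * real b"
    using q_eq e d_pos by (simp add: field_simps)
  then have "real_of_int (int d ^ 2 * e) = real_of_int (int c ^ 2 * int a * int b)" by simp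
  then have e_int: "int d ^ 2 * e = int c ^ 2 * (int a * int b)" by (simp only: of_int_eq_iff mult.assoc)
  have "int d ^ 2 dvd int c ^ 2 * (int a * int b)" unfolding e_int[symmetric] by simp
  moreover have "coprime (int d ^ 2) (int c ^ 2)" using cop_cd by (simp add: coprime_commute)
  ultimately have "int d ^ 2 dvd int a * int b" by (simp add: coprime_dvd_mult_right_iff)
  then obtain f where f: "int a * int b = int d ^ 2 * f" by blast
  have abpos: "int a * int b > 0" using apos bpos by simp
  have fpos: "f > 0"
  proof (rule ccontr)
    assume "\<not> f > 0"
    then have "int d ^ 2 * f \<le> 0" by (simp add: mult_nonneg_nonpos)
    then show False using abpos f by simp
  qed
  have e_f: "e = int c ^ 2 * f" using e_int f d_pos by (simp add: algebra_simps)
  have NXint: "\<And>x y. x \<in> NXlat \<Longrightarrow> y \<in> NXlat \<Longrightarrow> bf G x y \<in> \<int>" by (rule bf_int[OF G_int])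
  have qne: "bf G Ht Ht \<noteq> 0" using q_eq cpos apos bpos d_pos by simp
  obtain g0 where g0: "g0 > 0" "{bf G Ht x | x. x \<in> NXlat} = {of_int (g0 * k) | k. True}"
    using int_subgroup_gen[OF Bb NX_subgrp NXint[OF HtX] HtX qne] by blast
  have g_eq: "g = g0" unfolding g_def by (rule lat_gamma_eq) (rule g0(1), rule g0(2))
  have gpos: "g > 0" using g0 g_eq by simp
  have gamNX: "{bf G Ht x | x. x \<in> NXlat} = {of_int (g * k) | k. True}" using g0 g_eq by simp
  have "bf G Ht Ht \<in> {of_int (g * k) | k. True}" using HtX gamNX by blast
  then obtain j where "bf G Ht Ht = of_int (g * j)" by blast
  then have "real_of_int (2 * e) = real_of_int (g * j)" using e by simp
  then have "2 * e = g * j" by (simp only: of_int_eq_iff)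
  then have "g dvd int c ^ 2 * (2 * f)" unfolding e_f by (metis dvd_triv_left mult.left_commute)
  moreover have "coprime g (int c ^ 2)" using cop_cg by (simp add: coprime_commute)
  ultimately have "g dvd 2 * f" by (simp add: coprime_dvd_mult_right_iff)
  then obtain N where N: "2 * f = g * N" by blast
  have Npos: "N > 0"
  proof (rule ccontr)
    assume "\<not> N > 0"
    then have "g * N \<le> 0" using gpos by (simp add: mult_nonneg_nonpos)
    then show False using fpos N by simp
  qed
  have q_gN: "bf G Ht Ht = of_int (g * (N * int c ^ 2))"
  proof -
    have "bf G Ht Ht = of_int (2 * e)" using e by simp
    also have "2 * e = g * (N * int c ^ 2)" unfolding e_f using N by (simp add: algebra_simps)
    finally show ?thesis .
  qed
  have abN: "2 * real a * real b = real d ^ 2 * of_int g * of_int N"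
  proof -
    have "real_of_int (2 * (int a * int b)) = real_of_int (int d ^ 2 * (2 * f))" using f by simp
    then show ?thesis unfolding N by simp
  qed
  have L1: "latt (bf G) NXlat Ht g (N * int c ^ 2)"
  proof (unfold_locales)
    show "bilin (bf G)" by (rule Bb)
    show "subgrp NXlat" by (rule NX_subgrp)
    show "bf G x y \<in> \<int>" if "x \<in> NXlat" "y \<in> NXlat" for x y using that by (rule NXint)
    show "lat_primitive NXlat Ht" by (rule Ht_prim)
    show "g > 0" by (rule gpos)
    show "{bf G Ht x | x. x \<in> NXlat} = {of_int (g * k) | k. True}" by (rule gamNX)
    show "N * int c ^ 2 > 0" using Npos cpos by simp
    show "bf G Ht Ht = of_int (g * (N * int c ^ 2))" by (rule q_gN)
  qed
  have P1: "pstar (bf G) Ht = (real d ^ 2 / (2 * real a * real b * real c ^ 2)) *\<^sub>R Ht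
     \<and> ustar (bf G) NXlat Ht \<noteq> {}
     \<and> (\<forall>u \<in> ustar (bf G) NXlat Ht.
          NXlat = zspan ({Ht} \<union> KHt \<union> {of_int g *\<^sub>R pstar (bf G) Ht + u})
        \<and> real (coset_order KHt u) = 2 * real a * real b * real c ^ 2 / (real d ^ 2 * of_int g))"
  proof (intro conjI ballI)
    show "pstar (bf G) Ht = (real d ^ 2 / (2 * real a * real b * real c ^ 2)) *\<^sub>R Ht"
      unfolding pstar_def q_eq by (simp add: field_simps)
    show "ustar (bf G) NXlat Ht \<noteq> {}" by (rule latt.ustar_ne[OF L1])
    fix u assume u: "u \<in> ustar (bf G) NXlat Ht"
    show "NXlat = zspan ({Ht} \<union> KHt \<union> {of_int g *\<^sub>R pstar (bf G) Ht + u})"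
      unfolding KHt_def by (rule latt.span_eq[OF L1 u])
    have "coset_order KHt u = nat (N * int c ^ 2)" unfolding KHt_def by (rule latt.order_eq[OF L1 u])
    then have "real (coset_order KHt u) = of_int N * real c ^ 2" using Npos by simp
    also have "\<dots> = 2 * real a * real b * real c ^ 2 / (real d ^ 2 * of_int g)"
      using abN gpos d_pos by (simp add: field_simps)
    finally show "real (coset_order KHt u) = 2 * real a * real b * real c ^ 2 / (real d ^ 2 * of_int g)" .
  qed
  have mk: "\<And>x0 x x2 y0 y y2. mukai G (x0, x, x2) (y0, y, y2) = - (x0 * y2 + x2 * y0) + bf G x y"
    by (simp add: mukai_def)
  have bfH: "\<And>x. bf G H x = real d * bf G Ht x" unfolding H_eq by (simp add: bilin_scaleL[OF Bb])
  have mvv: "mukai G v v = 0" unfolding v_def mk using H_sq by simp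
  have mvh: "mukai G v h = 0" unfolding v_def h_def mk using rr sr bilin_0R[OF Bb] by (simp add: algebra_simps)
  have mhv: "mukai G h v = 0" using mvh bilin_sym[OF Bm] by metis
  have mhh: "mukai G h h = 2 * real a * real b" unfolding h_def mk using bilin_0R[OF Bb] by simp
  have ht_h: "ht = (1 / real d) *\<^sub>R h" by (simp add: ht_def)
  have mht: "\<And>x. mukai G ht x = (1 / real d) * mukai G h x" unfolding ht_h by (simp add: bilin_scaleL[OF Bm])
  have mhtv: "mukai G ht v = 0" using mht mhv by simp
  have mvht: "mukai G v ht = 0" using mhtv bilin_sym[OF Bm] by metis
  have NYs: "subgrp NY" unfolding NY_def by (rule NY_subgrp[OF Bm])
  have NYi: "\<And>x y. x \<in> NY \<Longrightarrow> y \<in> NY \<Longrightarrow> mukai G x y \<in> \<int>"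
    unfolding NY_def by (rule NY_int[OF Bm G_int mvv])
  have NYmem: "\<And>w t. w \<in> mukai_lat \<Longrightarrow> mukai G v w = 0 \<Longrightarrow> w + t *\<^sub>R v \<in> NY"
    unfolding NY_def by (rule NY_mem)
  have NYE: "\<And>y. y \<in> NY \<Longrightarrow> \<exists>w t. y = w + t *\<^sub>R v \<and> w \<in> mukai_lat \<and> mukai G v w = 0"
    unfolding NY_def NYlat_def by blast
  have mlE: "\<And>w. w \<in> mukai_lat \<Longrightarrow> \<exists>W0 W2. fst w = of_int W0 \<and> snd (snd w) = of_int W2 \<and> fst (snd w) \<in> NXlat"
    unfolding mukai_lat_def by (auto elim!: Ints_cases)
  have hL: "h \<in> mukai_lat" unfolding h_def mukai_lat_def NXlat_def by simp
  have hNY: "h \<in> NY" using NYmem[OF hL mvh, of 0] by simp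
  have dab: "int d dvd int a * int b"
  proof -
    have "int a * int b = int d * (int d * f)" using f by (simp add: power2_eq_square)
    then show ?thesis by simp
  qed
  obtain j where j: "int d dvd int a * (j * int c - 1)" "int d dvd int b * (j * int c + 1)"
    using NT_ht[OF cop_ab_i cop_cd dab] by blast
  obtain k1 where k1: "int a * (j * int c - 1) = int d * k1" using j(1) by blast
  obtain k2 where k2: "int b * (j * int c + 1) = int d * k2" using j(2) by blast
  have k1r: "real a * (of_int j * real c - 1) = real d * of_int k1"
  proof -
    have "real_of_int (int a * (j * int c - 1)) = real_of_int (int d * k1)" using k1 by simp
    then show ?thesis by simp
  qed
  have k2r: "real b * (of_int j * real c + 1) = real d * of_int k2"
  proof -
    have "real_of_int (int b * (j * int c + 1)) = real_of_int (int d * k2)" using k2 by simp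
    then show ?thesis by simp
  qed
  define wj where "wj = ht + (of_int j / real d) *\<^sub>R v"
  have wj1: "fst wj = of_int k1"
  proof -
    have "fst wj = (- real a + of_int j * real r) / real d"
      unfolding wj_def ht_def h_def v_def using d_pos by (simp add: field_simps)
    also have "\<dots> = of_int k1" using k1r rr d_pos by (simp add: field_simps)
    finally show ?thesis .
  qed
  have wj3: "snd (snd wj) = of_int k2"
  proof -
    have "snd (snd wj) = (real b + of_int j * real s) / real d"
      unfolding wj_def ht_def h_def v_def using d_pos by (simp add: field_simps)
    also have "\<dots> = of_int k2" using k2r sr d_pos by (simp add: field_simps)
    finally show ?thesis .
  qed
  have wj2: "fst (snd wj) = of_int j *\<^sub>R Ht"
    unfolding wj_def ht_def h_def v_def H_eq using d_pos by simp
  have wjL: "wj \<in> mukai_lat" unfolding mukai_lat_def using wj1 wj2 wj3 subgrp_int[OF NX_subgrp HtX] by simp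
  have wjv: "mukai G v wj = 0" unfolding wj_def
    by (simp add: bilin_addR[OF Bm] bilin_scaleR[OF Bm] mvht mvv)
  have "ht = wj + (- (of_int j / real d)) *\<^sub>R v" unfolding wj_def by simp
  then have htNY: "ht \<in> NY" using NYmem[OF wjL wjv] by metis
  have Ht_rat: "t \<in> \<int>" if tH: "t *\<^sub>R Ht \<in> NXlat" for t
  proof -
    have "Ht \<noteq> 0" using qne bilin_0L[OF Bb] by auto
    then have "\<exists>i. Ht $ i \<noteq> 0" by (simp add: vec_eq_iff)
    then obtain i where i: "Ht $ i \<noteq> 0" by blast
    have "Ht $ i \<in> \<int>" using HtX unfolding NXlat_def by simp
    then obtain m where m: "Ht $ i = of_int m" by (rule Ints_cases)
    have "(t *\<^sub>R Ht) $ i \<in> \<int>" using tH unfolding NXlat_def by blast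
    then have "t * Ht $ i \<in> \<int>" by simp
    then obtain p where p: "t * Ht $ i = of_int p" by (rule Ints_cases)
    have mne: "m \<noteq> 0" using i m by simp
    show ?thesis
    proof (cases "m > 0")
      case True
      have tp: "t = of_int p / of_int m" using p m mne by (simp add: field_simps)
      then have "(of_int p / of_int m) *\<^sub>R Ht \<in> NXlat" using tH by simp
      then have "m dvd p" by (rule prim_rat[OF NX_subgrp Ht_prim True])
      then obtain k where "p = m * k" by blast
      then have "t = of_int k" using tp mne by simp
      then show ?thesis by simp
    next
      case False
      then have mneg: "-m > 0" using mne by simp
      have tp: "t = of_int (-p) / of_int (-m)" using p m mne by (simp add: field_simps)
      then have "(of_int (-p) / of_int (-m)) *\<^sub>R Ht \<in> NXlat" using tH by simp
      then have "-m dvd -p" by (rule prim_rat[OF NX_subgrp Ht_prim mneg])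
      then obtain k where "-p = -m * k" by blast
      then have "t = of_int k" using tp mne by simp
      then show ?thesis by simp
    qed
  qed
  have htprim: "lat_primitive NY ht"
    unfolding lat_primitive_def
  proof (intro conjI allI impI)
    show "ht \<in> NY" by (rule htNY)
    fix n :: nat assume n: "n > 1"
    show "(1 / real n) *\<^sub>R ht \<notin> NY"
    proof
      assume "(1 / real n) *\<^sub>R ht \<in> NY"
      then obtain w t where wt: "(1 / real n) *\<^sub>R ht = w + t *\<^sub>R v" "w \<in> mukai_lat" "mukai G v w = 0"
        using NYE by blast
      obtain W0 W2 where W: "fst w = of_int W0" "snd (snd w) = of_int W2" "fst (snd w) \<in> NXlat"
        using mlE[OF wt(2)] by blast
      have c1: "- (real a / (real n * real d)) = of_int W0 + t * real r"
        using arg_cong[OF wt(1), of fst] W(1) unfolding ht_def h_def v_def by simp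
      have c3: "real b / (real n * real d) = of_int W2 + t * real s"
        using arg_cong[OF wt(1), of "\<lambda>x. snd (snd x)"] W(2) unfolding ht_def h_def v_def by simp
      have "0 = fst (snd w) + t *\<^sub>R H"
        using arg_cong[OF wt(1), of "\<lambda>x. fst (snd x)"] unfolding ht_def h_def v_def by simp
      then have "fst (snd w) = (- (t * real d)) *\<^sub>R Ht" unfolding H_eq by (simp add: eq_neg_iff_add_eq_0 add.commute)
      then have "(- (t * real d)) *\<^sub>R Ht \<in> NXlat" using W(3) by simp
      then have "- (t * real d) \<in> \<int>" by (rule Ht_rat)
      then have "t * real d \<in> \<int>" using Ints_minus[of "- (t * real d)"] by simp
      then obtain J where J: "t * real d = of_int J" by (rule Ints_cases)
      have "- real a = real n * (real d * of_int W0 + of_int J * real c * real a)"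
      proof -
        have "- real a = real d * real n * (of_int W0 + t * real r)" using c1 n d_pos by (simp add: field_simps)
        also have "\<dots> = real n * (real d * of_int W0 + (t * real d) * real c * real a)"
          using rr by (simp add: algebra_simps)
        finally show ?thesis using J by simp
      qed
      then have "real_of_int (- int a) = real_of_int (int n * (int d * W0 + J * int c * int a))" by simp
      then have "- int a = int n * (int d * W0 + J * int c * int a)" by (simp only: of_int_eq_iff)
      then have "int a = int n * (- (int d * W0 + J * int c * int a))" by (simp add: algebra_simps)
      then have na: "int n dvd int a" by (rule dvdI)
      have "real b = real n * (real d * of_int W2 + of_int J * real c * real b)"
      proof -
        have "real b = real d * real n * (of_int W2 + t * real s)" using c3 n d_pos by (simp add: field_simps)
        also have "\<dots> = real n * (real d * of_int W2 + (t * real d) * real c * real b)"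
          using sr by (simp add: algebra_simps)
        finally show ?thesis using J by simp
      qed
      then have "real_of_int (int b) = real_of_int (int n * (int d * W2 + J * int c * int b))" by simp
      then have "int b = int n * (int d * W2 + J * int c * int b)" by (simp only: of_int_eq_iff)
      then have nb: "int n dvd int b" by (rule dvdI)
      have "\<bar>int n\<bar> = 1" using coprime_common_divisor_int[OF cop_ab_i na nb] .
      then show False using n by simp
    qed
  qed
  have D2: "int d * g dvd 2 * int a * int b"
  proof -
    have "2 * int a * int b = int d ^ 2 * (2 * f)" using f by (simp add: algebra_simps)
    also have "\<dots> = int d ^ 2 * (g * N)" using N by simp
    also have "\<dots> = int d * g * (int d * N)" by (simp add: algebra_simps power2_eq_square)
    finally have "2 * int a * int b = int d * g * (int d * N)" .
    then show ?thesis by simp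
  qed
  have cop_dgc: "coprime (int d * g) (int c)" using coprime by (simp add: coprime_commute)
  obtain x1 where x1: "x1 \<in> NXlat" "bf G Ht x1 = of_int g"
  proof -
    have "(of_int (g * 1) :: real) \<in> {bf G Ht x | x. x \<in> NXlat}" unfolding gamNX by blast
    then show ?thesis using that by auto
  qed
  have gamNY: "{mukai G ht y | y. y \<in> NY} = {of_int (g * k) | k. True}"
  proof (intro set_eqI iffI)
    fix z :: real assume "z \<in> {mukai G ht y | y. y \<in> NY}"
    then obtain y where y: "y \<in> NY" "z = mukai G ht y" by blast
    obtain w t where wt: "y = w + t *\<^sub>R v" "w \<in> mukai_lat" "mukai G v w = 0" using NYE[OF y(1)] by blast
    obtain W0 W2 where W: "fst w = of_int W0" "snd (snd w) = of_int W2" "fst (snd w) \<in> NXlat"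
      using mlE[OF wt(2)] by blast
    obtain k where k: "bf G Ht (fst (snd w)) = of_int (g * k)" using gamNX W(3) by blast
    have "mukai G v w = - (real r * of_int W2 + real s * of_int W0) + real d * bf G Ht (fst (snd w))"
      unfolding mukai_def v_def using W bfH by simp
    then have "real c * (real a * of_int W2 + real b * of_int W0) = real d * of_int (g * k)"
      using wt(3) k rr sr by (simp add: algebra_simps)
    then have "real_of_int (int c * (int a * W2 + int b * W0)) = real_of_int (int d * (g * k))" by simp
    then have "int c * (int a * W2 + int b * W0) = int d * (g * k)" by (simp only: of_int_eq_iff)
    then have "int d * g dvd int c * (int a * W2 + int b * W0)" by (simp add: algebra_simps)
    then have D1: "int d * g dvd int a * W2 + int b * W0" using cop_dgc by (simp add: coprime_dvd_mult_right_iff)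
    have "int d * g dvd int a * W2 - int b * W0" by (rule NT_gam[OF cop_ab_i D2 D1])
    then obtain k' where k': "int a * W2 - int b * W0 = int d * g * k'" by blast
    have k'r: "real a * of_int W2 - real b * of_int W0 = real d * of_int g * of_int k'"
    proof -
      have "real_of_int (int a * W2 - int b * W0) = real_of_int (int d * g * k')" using k' by simp
      then show ?thesis by simp
    qed
    have "mukai G ht y = mukai G ht w"
      unfolding wt(1) by (simp add: bilin_addR[OF Bm] bilin_scaleR[OF Bm] mhtv)
    also have "\<dots> = (1 / real d) * mukai G h w" by (rule mht)
    also have "mukai G h w = real a * of_int W2 - real b * of_int W0"
      unfolding h_def mukai_def using W bilin_0L[OF Bb] by simp
    also have "(1 / real d) * (real a * of_int W2 - real b * of_int W0) = (real a * of_int W2 - real b * of_int W0) / real d"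
      by simp
    also have "\<dots> = of_int (g * k')" using k'r d_pos by simp
    finally show "z \<in> {of_int (g * k) | k. True}" using y by blast
  next
    fix z :: real assume "z \<in> {of_int (g * k) | k. True}"
    then obtain k where k: "z = of_int (g * k)" by blast
    obtain s0 t0 where st: "s0 * int a + t0 * int b = 1" using bezout_int[of "int a" "int b"] cop_ab_i by auto
    define nu where "nu = s0"
    define mu where "mu = - t0"
    have numu: "int a * nu - int b * mu = 1" using st unfolding nu_def mu_def by (simp add: algebra_simps)
    define mm where "mm = int a * nu + int b * mu"
    define y0 where "y0 = (real_of_int (int d * g * mu), real_of_int (int c * mm) *\<^sub>R x1, real_of_int (int d * g * nu))"
    have "real_of_int (int c * mm) *\<^sub>R x1 \<in> NXlat" by (rule subgrp_int[OF NX_subgrp x1(1)])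
    then have y0L: "y0 \<in> mukai_lat" unfolding y0_def mukai_lat_def by (simp del: of_int_mult)
    have y0v: "mukai G v y0 = 0"
    proof -
      have "mukai G v y0 = - (real r * (real d * of_int g * of_int nu) + real s * (real d * of_int g * of_int mu))
          + real d * (real c * of_int mm * of_int g)"
        unfolding y0_def v_def mk bfH using x1 by (simp add: bilin_scaleR[OF Bb])
      also have "\<dots> = 0" unfolding rr sr mm_def by (simp add: algebra_simps)
      finally show ?thesis .
    qed
    have y0NY: "y0 \<in> NY" using NYmem[OF y0L y0v, of 0] by simp
    have y0g: "mukai G ht y0 = of_int g"
    proof -
      have "mukai G ht y0 = (1 / real d) * (real d * of_int g * (real a * of_int nu - real b * of_int mu))"
        unfolding mht y0_def h_def mk using bilin_0L[OF Bb] by (simp add: algebra_simps)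
      also have "real a * of_int nu - real b * of_int mu = 1"
      proof -
        have "real_of_int (int a * nu - int b * mu) = 1" using numu by simp
        then show ?thesis by simp
      qed
      finally show ?thesis using d_pos by simp
    qed
    have "of_int k *\<^sub>R y0 \<in> NY" by (rule subgrp_int[OF NYs y0NY])
    moreover have "mukai G ht (of_int k *\<^sub>R y0) = z" using k y0g by (simp add: bilin_scaleR[OF Bm])
    ultimately show "z \<in> {mukai G ht y | y. y \<in> NY}" by blast
  qed
  have htht: "mukai G ht ht = of_int (g * N)"
  proof -
    have "mukai G ht ht = (1 / real d) * ((1 / real d) * (2 * real a * real b))"
      using mht[of ht] mhh bilin_sym[OF Bm, of h ht] by (simp add: mht)
    also have "\<dots> = of_int g * of_int N" using abN d_pos by (simp add: field_simps power2_eq_square)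
    finally show ?thesis by simp
  qed
  have L2: "latt (mukai G) NY ht g N"
  proof (unfold_locales)
    show "bilin (mukai G)" by (rule Bm)
    show "subgrp NY" by (rule NYs)
    show "mukai G x y \<in> \<int>" if "x \<in> NY" "y \<in> NY" for x y using that by (rule NYi)
    show "lat_primitive NY ht" by (rule htprim)
    show "g > 0" by (rule gpos)
    show "{mukai G ht x | x. x \<in> NY} = {of_int (g * k) | k. True}" by (rule gamNY)
    show "N > 0" by (rule Npos)
    show "mukai G ht ht = of_int (g * N)" by (rule htht)
  qed
  have Kh_eq: "Kh = orth (mukai G) NY ht"
    unfolding Kh_def orth_def using mht d_pos by auto
  have P2: "h \<in> NY \<and> mukai G h h = 2 * real a * real b
     \<and> ht \<in> NY \<and> lat_primitive NY ht
     \<and> lat_gamma (mukai G) NY ht = g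
     \<and> pstar (mukai G) ht = (real d ^ 2 / (2 * real a * real b)) *\<^sub>R ht
     \<and> ustar (mukai G) NY ht \<noteq> {}
     \<and> (\<forall>u \<in> ustar (mukai G) NY ht.
          NY = zspan ({ht} \<union> Kh \<union> {of_int g *\<^sub>R pstar (mukai G) ht + u})
        \<and> real (coset_order Kh u) = 2 * real a * real b / (real d ^ 2 * of_int g))"
  proof (intro conjI ballI)
    show "h \<in> NY" by (rule hNY)
    show "mukai G h h = 2 * real a * real b" by (rule mhh)
    show "ht \<in> NY" by (rule htNY)
    show "lat_primitive NY ht" by (rule htprim)
    show "lat_gamma (mukai G) NY ht = g" by (rule latt.gamma[OF L2])
    show "pstar (mukai G) ht = (real d ^ 2 / (2 * real a * real b)) *\<^sub>R ht"
    proof -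
      have "mukai G ht ht = 2 * real a * real b / real d ^ 2" using htht abN d_pos by (simp add: field_simps)
      then show ?thesis unfolding pstar_def by simp
    qed
    show "ustar (mukai G) NY ht \<noteq> {}" by (rule latt.ustar_ne[OF L2])
    fix u assume u: "u \<in> ustar (mukai G) NY ht"
    show "NY = zspan ({ht} \<union> Kh \<union> {of_int g *\<^sub>R pstar (mukai G) ht + u})"
      unfolding Kh_eq by (rule latt.span_eq[OF L2 u])
    have "coset_order Kh u = nat N" unfolding Kh_eq by (rule latt.order_eq[OF L2 u])
    then have "real (coset_order Kh u) = of_int N" using Npos by simp
    also have "\<dots> = 2 * real a * real b / (real d ^ 2 * of_int g)"
      using abN gpos d_pos by (simp add: field_simps)
    finally show "real (coset_order Kh u) = 2 * real a * real b / (real d ^ 2 * of_int g)" .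
  qed
  have iota_Kh: "\<iota> ` KHt \<subseteq> Kh"
  proof
    fix z assume "z \<in> \<iota> ` KHt"
    then obtain k where k: "k \<in> KHt" "z = \<iota> k" by blast
    have kX: "k \<in> NXlat" "bf G Ht k = 0" using k(1) unfolding KHt_def orth_def by auto
    have L: "\<iota> k \<in> mukai_lat" unfolding \<iota>_def mukai_lat_def using kX by simp
    have V: "mukai G v (\<iota> k) = 0" unfolding \<iota>_def v_def mk bfH using kX by simp
    have "\<iota> k \<in> NY" using NYmem[OF L V, of 0] by simp
    moreover have "mukai G h (\<iota> k) = 0" unfolding \<iota>_def h_def mk using bilin_0L[OF Bb] by simp
    ultimately show "z \<in> Kh" unfolding Kh_def orth_def k(2) by simp
  qed
  have iota_form: "\<forall>k\<in>KHt. \<forall>k'\<in>KHt. mukai G (\<iota> k) (\<iota> k') = bf G k k'" unfolding \<iota>_def mk by simp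
  have iota_inj: "\<forall>k\<in>KHt. \<forall>t::real. \<iota> k = t *\<^sub>R v \<longrightarrow> k = 0"
  proof (intro ballI allI impI)
    fix k t assume "k \<in> KHt" "\<iota> k = t *\<^sub>R v"
    then have "0 = t * real r" "k = t *\<^sub>R H" unfolding \<iota>_def v_def by auto
    then show "k = 0" using r_pos by simp
  qed
  have v_Kh: "t *\<^sub>R v \<in> Kh" for t
  proof -
    have "0 \<in> mukai_lat" by (rule subgrp_0[OF mukai_lat_subgrp])
    then have "0 + t *\<^sub>R v \<in> NY" using NYmem bilin_0R[OF Bm] by blast
    then show ?thesis unfolding Kh_def orth_def using mhv by (simp add: bilin_scaleR[OF Bm])
  qed
  have Kh_s: "subgrp Kh" unfolding Kh_eq by (rule latt.K_subgrp[OF L2])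
  have iota_add: "\<And>x y. \<iota> (x + y) = \<iota> x + \<iota> y" unfolding \<iota>_def by simp
  have iota_scale: "\<And>c x. \<iota> (c *\<^sub>R x) = c *\<^sub>R \<iota> x" unfolding \<iota>_def by simp
  have mvi: "\<And>x. mukai G v (\<iota> x) = real d * bf G Ht x" unfolding \<iota>_def v_def mk bfH by simp
  have mhi: "\<And>x. mukai G h (\<iota> x) = 0" unfolding \<iota>_def h_def mk using bilin_0L[OF Bb] by simp
  have mhti: "\<And>x. mukai G ht (\<iota> x) = 0" using mht mhi by simp
  define Nr where "Nr = 2 * real a * real b / (real d ^ 2 * of_int g)"
  have Nr_N: "Nr = of_int N" unfolding Nr_def using abN gpos d_pos by (simp add: field_simps)
  have gnz: "real_of_int g \<noteq> 0" using gpos by simp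
  obtain al be where albe: "al * int c + be * int d = 1" using bezout_int[of "int c" "int d"] cop_cd by auto
  have albe_r: "of_int al * real c + of_int be * real d = 1"
  proof -
    have "real_of_int (al * int c + be * int d) = 1" using albe by simp
    then show ?thesis by simp
  qed
  have gen_Kh: "(Nr * real c) *\<^sub>R \<iota> u \<in> Kh" if u: "u \<in> ustar (bf G) NXlat Ht" for u
  proof -
    note up = latt.ustar_props[OF L1 u]
    define x1' where "x1' = of_int g *\<^sub>R pstar (bf G) Ht + u"
    have x1X: "x1' \<in> NXlat" using up(2) x1'_def by simp
    have sc1: "Nr * real c * of_int g * (1 / bf G Ht Ht) = 1 / real c"
      unfolding Nr_def q_eq using gnz cpos apos bpos d_pos by (simp add: field_simps power2_eq_square)
    have "(Nr * real c) *\<^sub>R u = (Nr * real c) *\<^sub>R x1' - (Nr * real c * of_int g * (1 / bf G Ht Ht)) *\<^sub>R Ht"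
      unfolding x1'_def pstar_def by (simp add: algebra_simps)
    then have Nu: "(Nr * real c) *\<^sub>R u = (Nr * real c) *\<^sub>R x1' - (1 / real c) *\<^sub>R Ht" unfolding sc1 .
    define wu where "wu = (of_int be * real a, of_int (N * int c) *\<^sub>R x1' - of_int al *\<^sub>R Ht, of_int be * real b)"
    have "of_int (N * int c) *\<^sub>R x1' \<in> NXlat" by (rule subgrp_int[OF NX_subgrp x1X])
    moreover have "of_int al *\<^sub>R Ht \<in> NXlat" by (rule subgrp_int[OF NX_subgrp HtX])
    ultimately have "of_int (N * int c) *\<^sub>R x1' - of_int al *\<^sub>R Ht \<in> NXlat" by (rule subgrp_diff[OF NX_subgrp])
    then have wuL: "wu \<in> mukai_lat" unfolding wu_def mukai_lat_def by simp
    have mid: "(Nr * real c) *\<^sub>R u = of_int (N * int c) *\<^sub>R x1' - of_int al *\<^sub>R Ht - (of_int be / real c) *\<^sub>R H"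
    proof -
      have "1 / real c = of_int al + of_int be * real d / real c" using albe_r cpos by (simp add: field_simps)
      then have "(1 / real c) *\<^sub>R Ht = of_int al *\<^sub>R Ht + (of_int be / real c) *\<^sub>R H"
        unfolding H_eq by (simp add: scaleR_add_left)
      moreover have "(Nr * real c) *\<^sub>R x1' = of_int (N * int c) *\<^sub>R x1'" using Nr_N by simp
      ultimately show ?thesis using Nu by (simp add: algebra_simps)
    qed
    have wu_eq: "(Nr * real c) *\<^sub>R \<iota> u = wu + (- (of_int be / real c)) *\<^sub>R v"
      unfolding \<iota>_def wu_def v_def using mid rr sr cpos by simp
    have "mukai G v ((Nr * real c) *\<^sub>R \<iota> u) = 0" using up(1) mvi by (simp add: bilin_scaleR[OF Bm])
    then have wuv: "mukai G v wu = 0"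
      unfolding wu_eq by (simp add: bilin_addR[OF Bm] bilin_diffR[OF Bm] bilin_scaleR[OF Bm] mvv)
    have "(Nr * real c) *\<^sub>R \<iota> u \<in> NY" unfolding wu_eq by (rule NYmem[OF wuL wuv])
    moreover have "mukai G h ((Nr * real c) *\<^sub>R \<iota> u) = 0" by (simp add: bilin_scaleR[OF Bm] mhi)
    ultimately show ?thesis unfolding Kh_def orth_def by simp
  qed
  have Kh_gen: "Kh = zspan (\<iota> ` KHt \<union> range (\<lambda>t::real. t *\<^sub>R v)
                 \<union> {(2 * real a * real b / (real d ^ 2 * of_int g) * real c) *\<^sub>R \<iota> u})"
    if u: "u \<in> ustar (bf G) NXlat Ht" for u
  proof
    let ?gu = "(2 * real a * real b / (real d ^ 2 * of_int g) * real c) *\<^sub>R \<iota> u"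
    let ?A = "\<iota> ` KHt \<union> range (\<lambda>t::real. t *\<^sub>R v) \<union> {?gu}"
    have gu: "?gu = (Nr * real c) *\<^sub>R \<iota> u" unfolding Nr_def ..
    have "?A \<subseteq> Kh" using iota_Kh v_Kh gen_Kh[OF u] unfolding gu by blast
    then show "zspan ?A \<subseteq> Kh" by (rule zspan_sub[OF Kh_s])
    show "Kh \<subseteq> zspan ?A"
    proof
      note up = latt.ustar_props[OF L1 u]
      fix k assume k: "k \<in> Kh"
      then have kNY: "k \<in> NY" and kh: "mukai G h k = 0" unfolding Kh_def orth_def by auto
      obtain w t where wt: "k = w + t *\<^sub>R v" "w \<in> mukai_lat" "mukai G v w = 0" using NYE[OF kNY] by blast
      obtain W0 W2 where W: "fst w = of_int W0" "snd (snd w) = of_int W2" "fst (snd w) \<in> NXlat"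
        using mlE[OF wt(2)] by blast
      define x where "x = fst (snd w)"
      have w_eq: "w = (of_int W0, x, of_int W2)" using W unfolding x_def by (simp add: prod_eq_iff)
      have "mukai G h w = 0" using kh unfolding wt(1) by (simp add: bilin_addR[OF Bm] bilin_scaleR[OF Bm] mhv)
      then have "real a * of_int W2 = real b * of_int W0"
        unfolding h_def w_eq mk using bilin_0L[OF Bb] by simp
      then have "real_of_int (int a * W2) = real_of_int (int b * W0)" by simp
      then have abW: "int a * W2 = int b * W0" by (simp only: of_int_eq_iff)
      then have "int b dvd int a * W2" by simp
      then have "int b dvd W2" using cop_ab_i by (simp add: coprime_commute coprime_dvd_mult_right_iff)
      then obtain lam where lam: "W2 = int b * lam" by blast
      have W0l: "W0 = int a * lam" using abW bpos unfolding lam by (simp add: algebra_simps)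
      have W0r: "of_int W0 = real a * of_int lam" using W0l by simp
      have W2r: "of_int W2 = real b * of_int lam" using lam by simp
      have "mukai G v w = - (real r * of_int W2 + real s * of_int W0) + real d * bf G Ht x"
        unfolding v_def w_eq mk bfH by simp
      then have bx: "real d * bf G Ht x = 2 * real a * real b * real c * of_int lam"
        using wt(3) unfolding W0r W2r rr sr by (simp add: algebra_simps)
      define M where "M = N * int c * int d * lam"
      define x1' where "x1' = of_int g *\<^sub>R pstar (bf G) Ht + u"
      have x1X: "x1' \<in> NXlat" using up(2) x1'_def by simp
      have bx1: "bf G Ht x1' = of_int g"
        unfolding x1'_def by (simp add: bilin_addR[OF Bb] bilin_scaleR[OF Bb] latt.P_Ps[OF L1] up(1))
      define yy where "yy = x - of_int M *\<^sub>R x1'"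
      have yyX: "yy \<in> NXlat" unfolding yy_def
        by (rule subgrp_diff[OF NX_subgrp]) (use W(3) x_def subgrp_int[OF NX_subgrp x1X] in auto)
      have "bf G Ht yy = bf G Ht x - of_int M * of_int g"
        unfolding yy_def by (simp add: bilin_diffR[OF Bb] bilin_scaleR[OF Bb] bx1)
      also have "\<dots> = 0"
      proof -
        have "of_int M * of_int g = Nr * real c * real d * of_int lam * of_int g"
          unfolding M_def Nr_N by simp
        then have "real d * (of_int M * of_int g) = 2 * real a * real b * real c * of_int lam"
          unfolding Nr_def using gnz d_pos by (simp add: field_simps power2_eq_square)
        then have "real d * bf G Ht x = real d * (of_int M * of_int g)" using bx by simp
        then have "bf G Ht x = of_int M * of_int g" using d_pos by simp
        then show ?thesis by simp
      qed
      finally have yyK: "yy \<in> KHt" unfolding KHt_def orth_def using yyX by simp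
      have sc3: "of_int M * of_int g * (1 / bf G Ht Ht) = real d * of_int lam / real c"
      proof -
        have "of_int M = Nr * real c * real d * of_int lam" unfolding M_def Nr_N by simp
        then show ?thesis unfolding Nr_def q_eq using gnz cpos apos bpos d_pos
          by (simp add: field_simps power2_eq_square)
      qed
      have m1: "yy + (of_int (int d * lam) * (Nr * real c)) *\<^sub>R u = x - (of_int M * of_int g * (1 / bf G Ht Ht)) *\<^sub>R Ht"
      proof -
        have "of_int (int d * lam) * (Nr * real c) = of_int M" unfolding M_def Nr_N by simp
        then show ?thesis unfolding yy_def x1'_def pstar_def by (simp add: algebra_simps)
      qed
      have mid: "yy + (of_int (int d * lam) * (Nr * real c)) *\<^sub>R u + (t + of_int lam / real c) *\<^sub>R H = x + t *\<^sub>R H"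
      proof -
        have "(t + of_int lam / real c) * real d = t * real d + real d * of_int lam / real c" by (simp add: field_simps)
        then have "(t + of_int lam / real c) *\<^sub>R H = (t * real d) *\<^sub>R Ht + (real d * of_int lam / real c) *\<^sub>R Ht"
          unfolding H_eq by (simp add: scaleR_add_left[symmetric])
        then show ?thesis unfolding m1 sc3 H_eq by (simp add: algebra_simps)
      qed
      have k_eq: "k = \<iota> yy + of_int (int d * lam) *\<^sub>R ?gu + (t + of_int lam / real c) *\<^sub>R v"
      proof -
        have "\<iota> yy + of_int (int d * lam) *\<^sub>R ?gu + (t + of_int lam / real c) *\<^sub>R v
            = ((t + of_int lam / real c) * real r,
               yy + (of_int (int d * lam) * (Nr * real c)) *\<^sub>R u + (t + of_int lam / real c) *\<^sub>R H,
               (t + of_int lam / real c) * real s)"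
          unfolding \<iota>_def v_def by (simp add: Nr_def)
        also have "\<dots> = (of_int W0 + t * real r, x + t *\<^sub>R H, of_int W2 + t * real s)"
          unfolding mid W0r W2r rr sr using cpos by (simp add: field_simps)
        also have "\<dots> = k" unfolding wt(1) w_eq v_def by simp
        finally show ?thesis by simp
      qed
      have "\<iota> yy \<in> zspan ?A" using yyK by (intro zspan_base) blast
      moreover have "of_int (int d * lam) *\<^sub>R ?gu \<in> zspan ?A" by (intro zspan_int zspan_base) blast
      moreover have "(t + of_int lam / real c) *\<^sub>R v \<in> zspan ?A" by (intro zspan_base) blast
      ultimately show "k \<in> zspan ?A" unfolding k_eq by (intro zspan_add)
    qed
  qed
  have qspan_eq: "qspan Kh = qspan (\<iota> ` KHt \<union> range (\<lambda>t::real. t *\<^sub>R v))"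
  proof
    let ?B = "\<iota> ` KHt \<union> range (\<lambda>t::real. t *\<^sub>R v)"
    obtain u where u: "u \<in> ustar (bf G) NXlat Ht" using latt.ustar_ne[OF L1] by blast
    note up = latt.ustar_props[OF L1 u]
    let ?gu = "(2 * real a * real b / (real d ^ 2 * of_int g) * real c) *\<^sub>R \<iota> u"
    have uq: "u \<in> qspan KHt" using up(3) unfolding KHt_def .
    have "\<iota> u \<in> qspan (\<iota> ` KHt)" by (rule qspan_image[OF iota_add iota_scale uq])
    moreover have "qspan (\<iota> ` KHt) \<subseteq> qspan ?B"
    proof (rule qspan_mono, rule subsetI)
      fix z assume "z \<in> \<iota> ` KHt"
      then have "z \<in> ?B" by (rule UnI1)
      then show "z \<in> qspan ?B" by (rule qspan_base)
    qed
    ultimately have "\<iota> u \<in> qspan ?B" by blast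
    moreover have "2 * real a * real b / (real d ^ 2 * of_int g) * real c \<in> \<rat>"
      using Nr_N unfolding Nr_def by simp
    ultimately have guq: "?gu \<in> qspan ?B" by (rule qspan_scale[rotated])
    have "\<iota> ` KHt \<union> range (\<lambda>t::real. t *\<^sub>R v) \<union> {?gu} \<subseteq> qspan ?B"
    proof (rule subsetI)
      fix z assume "z \<in> \<iota> ` KHt \<union> range (\<lambda>t::real. t *\<^sub>R v) \<union> {?gu}"
      then consider "z \<in> ?B" | "z = ?gu" by blast
      then show "z \<in> qspan ?B"
      proof cases
        case 1 then show ?thesis by (rule qspan_base)
      next
        case 2 then show ?thesis using guq by simp
      qed
    qed
    then have "qspan (\<iota> ` KHt \<union> range (\<lambda>t::real. t *\<^sub>R v) \<union> {?gu}) \<subseteq> qspan ?B" by (rule qspan_mono)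
    moreover have "Kh \<subseteq> qspan (\<iota> ` KHt \<union> range (\<lambda>t::real. t *\<^sub>R v) \<union> {?gu})"
      by (subst Kh_gen[OF u]) (rule zspan_qspan)
    ultimately have "Kh \<subseteq> qspan ?B" by blast
    then show "qspan Kh \<subseteq> qspan ?B" by (rule qspan_mono)
    have "?B \<subseteq> Kh" using iota_Kh v_Kh by auto
    also have "Kh \<subseteq> qspan Kh" using qspan_base by (rule subsetI)
    finally have "?B \<subseteq> qspan Kh" .
    then show "qspan ?B \<subseteq> qspan Kh" by (rule qspan_mono)
  qed
  have pht: "pstar (mukai G) ht = (real d ^ 2 / (2 * real a * real b)) *\<^sub>R ht" using P2 by blast
  have mclaim: "\<forall>u \<in> ustar (bf G) NXlat Ht. \<forall>w \<in> ustar (mukai G) NY ht. \<forall>m::int.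
          [m = -1] (mod 2 * int a) \<and> [m = 1] (mod 2 * int b)
          \<longrightarrow> w - (of_int m * real c) *\<^sub>R \<iota> u \<in> Kh"
  proof (intro ballI allI impI)
    fix u w and m :: int
    assume u: "u \<in> ustar (bf G) NXlat Ht" and w: "w \<in> ustar (mukai G) NY ht"
      and cm: "[m = -1] (mod 2 * int a) \<and> [m = 1] (mod 2 * int b)"
    have "2 * int a dvd m - (-1)" using cm cong_iff_dvd_diff by blast
    then obtain nu where nu: "m + 1 = 2 * int a * nu" by (auto elim!: dvdE)
    have "2 * int b dvd m - 1" using cm cong_iff_dvd_diff by blast
    then obtain mu where mu: "m - 1 = 2 * int b * mu" by (auto elim!: dvdE)
    have nur: "of_int m = 2 * real a * of_int nu - 1"
    proof -
      have "real_of_int (m + 1) = real_of_int (2 * int a * nu)" using nu by simp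
      then show ?thesis by simp
    qed
    have mur: "of_int m = 2 * real b * of_int mu + 1"
    proof -
      have "real_of_int (m - 1) = real_of_int (2 * int b * mu)" using mu by simp
      then show ?thesis by simp
    qed
    note up = latt.ustar_props[OF L1 u]
    note wp = latt.ustar_props[OF L2 w]
    define x1' where "x1' = of_int g *\<^sub>R pstar (bf G) Ht + u"
    have x1X: "x1' \<in> NXlat" using up(2) x1'_def by simp
    define xi where "xi = of_int g *\<^sub>R pstar (mukai G) ht + (of_int m * real c) *\<^sub>R \<iota> u"
    define wx where "wx = (real_of_int (int d * g * mu), real_of_int (m * int c) *\<^sub>R x1', real_of_int (int d * g * nu))"
    define tx where "tx = of_int m * of_int g * real d / (2 * real a * real b * real c)"
    have "real_of_int (m * int c) *\<^sub>R x1' \<in> NXlat" by (rule subgrp_int[OF NX_subgrp x1X])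
    then have wxL: "wx \<in> mukai_lat" unfolding wx_def mukai_lat_def by (simp del: of_int_mult)
    have mid: "(of_int m * real c) *\<^sub>R u = real_of_int (m * int c) *\<^sub>R x1' - (tx * real d) *\<^sub>R Ht"
    proof -
      have "of_int m * real c * of_int g * (1 / bf G Ht Ht) = tx * real d"
        unfolding tx_def q_eq using gnz cpos apos bpos d_pos by (simp add: field_simps power2_eq_square)
      then show ?thesis unfolding x1'_def pstar_def by (simp add: algebra_simps)
    qed
    have xi_eq: "xi = wx + (- tx) *\<^sub>R v"
    proof -
      have "xi = (- (of_int g * real d / (2 * real b)), (of_int m * real c) *\<^sub>R u, of_int g * real d / (2 * real a))"
        unfolding xi_def pht unfolding ht_def h_def \<iota>_def using apos bpos d_pos by (simp add: field_simps power2_eq_square)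
      also have "\<dots> = (real_of_int (int d * g * mu) - tx * real r, real_of_int (m * int c) *\<^sub>R x1' - tx *\<^sub>R H,
                         real_of_int (int d * g * nu) - tx * real s)"
      proof -
        have c1: "- (of_int g * real d / (2 * real b)) = real_of_int (int d * g * mu) - tx * real r"
          unfolding tx_def rr using apos bpos cpos d_pos by (simp add: mur field_simps)
        have c3: "of_int g * real d / (2 * real a) = real_of_int (int d * g * nu) - tx * real s"
          unfolding tx_def sr using apos bpos cpos d_pos by (simp add: nur field_simps)
        have c2: "(of_int m * real c) *\<^sub>R u = real_of_int (m * int c) *\<^sub>R x1' - tx *\<^sub>R H"
          using mid unfolding H_eq by simp
        show ?thesis using c1 c2 c3 by simp
      qed
      also have "\<dots> = wx + (- tx) *\<^sub>R v" unfolding wx_def v_def by simp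
      finally show ?thesis .
    qed
    have "mukai G v xi = 0"
      unfolding xi_def pht by (simp add: bilin_addR[OF Bm] bilin_scaleR[OF Bm] mvht mvi up(1))
    then have wxv: "mukai G v wx = 0"
      using xi_eq by (simp add: bilin_addR[OF Bm] bilin_diffR[OF Bm] bilin_scaleR[OF Bm] mvv)
    have xiNY: "xi \<in> NY" unfolding xi_eq by (rule NYmem[OF wxL wxv])
    have eq: "w - (of_int m * real c) *\<^sub>R \<iota> u = (of_int g *\<^sub>R pstar (mukai G) ht + w) - xi"
      unfolding xi_def by simp
    have inNY: "w - (of_int m * real c) *\<^sub>R \<iota> u \<in> NY" unfolding eq by (rule subgrp_diff[OF NYs wp(2) xiNY])
    have "mukai G ht (w - (of_int m * real c) *\<^sub>R \<iota> u) = 0"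
      using wp(1) mhti by (simp add: bilin_diffR[OF Bm] bilin_scaleR[OF Bm])
    then show "w - (of_int m * real c) *\<^sub>R \<iota> u \<in> Kh" unfolding Kh_eq orth_def using inNY by simp
  qed
  have P3: "\<iota> ` KHt \<subseteq> Kh
     \<and> (\<forall>k\<in>KHt. \<forall>k'\<in>KHt. mukai G (\<iota> k) (\<iota> k') = bf G k k')
     \<and> (\<forall>k\<in>KHt. \<forall>t::real. \<iota> k = t *\<^sub>R v \<longrightarrow> k = 0)
     \<and> qspan Kh = qspan (\<iota> ` KHt \<union> range (\<lambda>t::real. t *\<^sub>R v))
     \<and> (\<forall>u \<in> ustar (bf G) NXlat Ht.
          Kh = zspan (\<iota> ` KHt \<union> range (\<lambda>t::real. t *\<^sub>R v)
                 \<union> {(2 * real a * real b / (real d ^ 2 * of_int g) * real c) *\<^sub>R \<iota> u}))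
     \<and> (\<forall>u \<in> ustar (bf G) NXlat Ht. \<forall>w \<in> ustar (mukai G) NY ht. \<forall>m::int.
          [m = -1] (mod 2 * int a) \<and> [m = 1] (mod 2 * int b)
          \<longrightarrow> w - (of_int m * real c) *\<^sub>R \<iota> u \<in> Kh)"
    using iota_Kh iota_form iota_inj qspan_eq Kh_gen mclaim by (intro conjI ballI) auto
  show ?thesis by (rule conjI[OF P1 conjI[OF P2 P3]])
qed


end
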